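(* Let $\delta>0$ be a constant. For scheduling on $m$ identical parallel machines with all jobs available at time $0$, if all predictions are underestimates ($\hat p_j\le p_j$ for every job $j$), then PMLF for parallel machines with parameter $\delta$ is $(2+2\delta)$-competitive for minimizing the total completion time and performs at most $O\big(\frac1\delta\sum_j\log(p_j/\hat p_j)\big)$ preemptions in total.
   Context: There are $n$ jobs, all available at time $0$, and $m$ identical machines, each processing at most one job at a time at unit speed; each job is processed by at most one machine at a time; preemption and migration are allowed. Job $j$ has an unknown processing requirement $p_j\ge1$, learned only at completion, and a known prediction $\hat p_j>0$; it completes at time $C_j$ once it has received $p_j$ units of processing. A preemption is an interruption of a job's processing before completion. An algorithm is $c$-competitive if on every instance $\sum_jC_j$ is at most $c$ times the optimal offline total completion time. PMLF for parallel machines with parameter $\delta>0$: maintain queues $Q_k$ indexed by integers $k$; initially place job $j$ with $(1+\delta)^k\le\hat p_j<(1+\delta)^{k+1}$ into $Q_k$. At any time $t$, associate with each available job the pair $(k,a)$, where $k$ is the index of its current queue and $a$ its position in that queue (the head has position $1$); order the available jobs lexicographically by these pairs and process the first at most $m$ jobs of this order (one per machine). If a job $j\in Q_i$ has received total processing $(1+\delta)^{i+1}$, remove it from $Q_i$ and place it at the end of $Q_{i+1}$.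
   Formalization: The preemption bound $O\big(\frac1\delta\sum_j\log(p_j/\hat p_j)\big)$ is replaced by c times the sum over all jobs of the ceiling of ln(requirement/prediction)/delta, with the constant c depending only on delta. Each condition added here is assumed in the paper as well or is needed for the statement above to hold. *)

theory Defs
  imports "HOL-Analysis.Analysis"
begin

text \<open>Jobs are the natural numbers below n; a schedule S maps each time t to the set of
  jobs processed at time t (each at unit speed on its own machine; migration is free).\<close>

definition indic :: "(real \<Rightarrow> nat set) \<Rightarrow> nat \<Rightarrow> real \<Rightarrow> real" where
  "indic S j s = (if j \<in> S s then 1 else 0)"

definition received :: "(real \<Rightarrow> nat set) \<Rightarrow> nat \<Rightarrow> real \<Rightarrow> real" where
  "received S j t = integral {0..t} (indic S j)"

definition feasible_schedule :: "nat \<Rightarrow> nat \<Rightarrow> (real \<Rightarrow> nat set) \<Rightarrow> bool" where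
  "feasible_schedule n m S \<longleftrightarrow>
     (\<forall>t. S t \<subseteq> {..<n} \<and> card (S t) \<le> m) \<and>
     (\<forall>j t. indic S j integrable_on {0..t})"

definition completes :: "(real \<Rightarrow> nat set) \<Rightarrow> (nat \<Rightarrow> real) \<Rightarrow> nat \<Rightarrow> bool" where
  "completes S p j \<longleftrightarrow> (\<exists>t\<ge>0. p j \<le> received S j t)"

definition compl_time :: "(real \<Rightarrow> nat set) \<Rightarrow> (nat \<Rightarrow> real) \<Rightarrow> nat \<Rightarrow> real" where
  "compl_time S p j = Inf {t. 0 \<le> t \<and> p j \<le> received S j t}"

definition total_cost :: "nat \<Rightarrow> (real \<Rightarrow> nat set) \<Rightarrow> (nat \<Rightarrow> real) \<Rightarrow> real" where
  "total_cost n S p = (\<Sum>j<n. compl_time S p j)"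

text \<open>Preemption of job j at time t: a processing stretch of j ends at t, before j completes.\<close>
definition preempt_at :: "(real \<Rightarrow> nat set) \<Rightarrow> (nat \<Rightarrow> real) \<Rightarrow> nat \<Rightarrow> real \<Rightarrow> bool" where
  "preempt_at S p j t \<longleftrightarrow> 0 < t \<and> t < compl_time S p j \<and>
     (\<exists>\<epsilon>>0. \<forall>s. t - \<epsilon> < s \<and> s < t \<longrightarrow> j \<in> S s) \<and>
     (\<forall>\<epsilon>>0. \<exists>s. t \<le> s \<and> s < t + \<epsilon> \<and> j \<notin> S s)"

definition num_preemptions :: "(real \<Rightarrow> nat set) \<Rightarrow> (nat \<Rightarrow> real) \<Rightarrow> nat \<Rightarrow> nat" where
  "num_preemptions S p j = card {t. preempt_at S p j t}"

definition thr :: "real \<Rightarrow> int \<Rightarrow> real" where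
  "thr \<delta> i = (1 + \<delta>) powr (real_of_int i)"

definition kinit :: "real \<Rightarrow> (nat \<Rightarrow> real) \<Rightarrow> nat \<Rightarrow> int" where
  "kinit \<delta> ph j = \<lfloor>log (1 + \<delta>) (ph j)\<rfloor>"

text \<open>Current queue index of job j at time t: it leaves Q_i as soon as it has received (1+delta)^(i+1).\<close>
definition qidx :: "real \<Rightarrow> (nat \<Rightarrow> real) \<Rightarrow> (real \<Rightarrow> nat set) \<Rightarrow> nat \<Rightarrow> real \<Rightarrow> int" where
  "qidx \<delta> ph S j t =
     (if received S j t < thr \<delta> (kinit \<delta> ph j + 1) then kinit \<delta> ph j
      else \<lfloor>log (1 + \<delta>) (received S j t)\<rfloor>)"

definition reached :: "real \<Rightarrow> (nat \<Rightarrow> real) \<Rightarrow> (real \<Rightarrow> nat set) \<Rightarrow> nat \<Rightarrow> int \<Rightarrow> real \<Rightarrow> bool" where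
  "reached \<delta> ph S j i t \<longleftrightarrow>
     kinit \<delta> ph j = i \<or> (kinit \<delta> ph j < i \<and> thr \<delta> i \<le> received S j t)"

definition enters_before :: "real \<Rightarrow> (nat \<Rightarrow> real) \<Rightarrow> (real \<Rightarrow> nat set) \<Rightarrow> nat \<Rightarrow> nat \<Rightarrow> int \<Rightarrow> bool" where
  "enters_before \<delta> ph S j j' i \<longleftrightarrow>
     (\<exists>s\<ge>0. reached \<delta> ph S j i s \<and> \<not> reached \<delta> ph S j' i s)"

text \<open>pos j i is the (tie-broken) position of job j in queue Q_i: positions are distinct, and
  a job placed into Q_i earlier is ahead of one placed later (appending at the end); ties among
  simultaneous placements (including the initial placement) are broken arbitrarily but fixed.\<close>
definition valid_positions :: "nat \<Rightarrow> real \<Rightarrow> (nat \<Rightarrow> real) \<Rightarrow> (real \<Rightarrow> nat set) \<Rightarrow> (nat \<Rightarrow> int \<Rightarrow> nat) \<Rightarrow> bool" where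
  "valid_positions n \<delta> ph S pos \<longleftrightarrow>
     (\<forall>i. inj_on (\<lambda>j. pos j i) {..<n}) \<and>
     (\<forall>j<n. \<forall>j'<n. \<forall>i. enters_before \<delta> ph S j j' i \<longrightarrow> pos j i < pos j' i)"

definition available :: "nat \<Rightarrow> (nat \<Rightarrow> real) \<Rightarrow> (real \<Rightarrow> nat set) \<Rightarrow> nat \<Rightarrow> real \<Rightarrow> bool" where
  "available n p S j t \<longleftrightarrow> j < n \<and> received S j t < p j"

definition prio_less :: "real \<Rightarrow> (nat \<Rightarrow> real) \<Rightarrow> (real \<Rightarrow> nat set) \<Rightarrow> (nat \<Rightarrow> int \<Rightarrow> nat) \<Rightarrow> nat \<Rightarrow> nat \<Rightarrow> real \<Rightarrow> bool" where
  "prio_less \<delta> ph S pos j j' t \<longleftrightarrow>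
     qidx \<delta> ph S j t < qidx \<delta> ph S j' t \<or>
     (qidx \<delta> ph S j t = qidx \<delta> ph S j' t \<and> pos j (qidx \<delta> ph S j t) < pos j' (qidx \<delta> ph S j t))"

text \<open>S is a run of PMLF (parameter delta) on m machines with tie-breaking positions pos:
  at every time t >= 0 exactly the first (at most) m available jobs in the order are processed.\<close>
definition is_PMLF :: "nat \<Rightarrow> nat \<Rightarrow> real \<Rightarrow> (nat \<Rightarrow> real) \<Rightarrow> (nat \<Rightarrow> real)
     \<Rightarrow> (real \<Rightarrow> nat set) \<Rightarrow> (nat \<Rightarrow> int \<Rightarrow> nat) \<Rightarrow> bool" where
  "is_PMLF n m \<delta> p ph S pos \<longleftrightarrow>
     feasible_schedule n m S \<and> valid_positions n \<delta> ph S pos \<and>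
     (\<forall>t\<ge>0. S t = {j. available n p S j t \<and>
                      card {j'. available n p S j' t \<and> prio_less \<delta> ph S pos j' j t} < m})"

end

theory Submission
  imports Defs
begin


lemma indic_01[simp]: "0 \<le> indic S j s" "indic S j s \<le> 1"
  by (auto simp: indic_def)

lemma received_neg: "t < 0 \<Longrightarrow> received S j t = 0"
  by (simp add: received_def)

lemma received_0[simp]: "received S j 0 = 0"
  by (simp add: received_def)

lemma received_diff:
  assumes int: "\<forall>t. indic S j integrable_on {0..t}" and "0 \<le> a" "a \<le> b"
  shows "received S j b - received S j a = integral {a..b} (indic S j)"
proof -
  have "indic S j integrable_on {0..b}" using int by blast
  hence "integral {0..a} (indic S j) + integral {a..b} (indic S j) = integral {0..b} (indic S j)"
    using assms by (intro Henstock_Kurzweil_Integration.integral_combine) auto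
  thus ?thesis by (simp add: received_def)
qed

lemma integral_indic_bounds:
  assumes "indic S j integrable_on {a..b}" "a \<le> b"
  shows "0 \<le> integral {a..b} (indic S j) \<and> integral {a..b} (indic S j) \<le> b - a"
proof
  show "0 \<le> integral {a..b} (indic S j)"
    using assms by (intro integral_nonneg) auto
  have "integral {a..b} (indic S j) \<le> integral {a..b} (\<lambda>_. 1::real)"
    using assms by (intro integral_le) auto
  thus "integral {a..b} (indic S j) \<le> b - a" using assms by simp
qed

lemma received_lip:
  assumes int: "\<forall>t. indic S j integrable_on {0..t}" and "a \<le> b"
  shows "0 \<le> received S j b - received S j a \<and> received S j b - received S j a \<le> b - a"
proof (cases "a < 0")
  case True
  hence ra: "received S j a = 0" by (rule received_neg)
  show ?thesis
  proof (cases "b < 0")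
    case True thus ?thesis using ra assms by (simp add: received_neg)
  next
    case False
    have "indic S j integrable_on {0..b}" using int by blast
    hence "0 \<le> received S j b \<and> received S j b \<le> b - 0"
      using integral_indic_bounds[of S j 0 b] False by (simp add: received_def)
    thus ?thesis using ra \<open>a < 0\<close> by simp
  qed
next
  case False
  have "indic S j integrable_on {a..b}"
    using int integrable_subinterval_real[of "indic S j" 0 b a b] False assms(2) by auto
  thus ?thesis using received_diff[OF int, of a b] False assms(2)
      integral_indic_bounds[of S j a b] by simp
qed

lemma received_mono:
  assumes "\<forall>t. indic S j integrable_on {0..t}" "a \<le> b"
  shows "received S j a \<le> received S j b"
  using received_lip[OF assms] by simp

lemma received_nonneg:
  assumes "\<forall>t. indic S j integrable_on {0..t}"
  shows "0 \<le> received S j t"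
  using received_lip[OF assms, of 0 t] received_neg[of t S j]
  by (cases "t < 0") auto

lemma received_cont:
  assumes "\<forall>t. indic S j integrable_on {0..t}"
  shows "continuous_on A (received S j)"
proof -
  have "1-lipschitz_on A (received S j)"
    unfolding lipschitz_on_def
  proof (intro conjI ballI)
    fix x y assume "x \<in> A" "y \<in> A"
    show "dist (received S j x) (received S j y) \<le> 1 * dist x y"
      using received_lip[OF assms, of x y] received_lip[OF assms, of y x]
      by (cases "x \<le> y") (auto simp: dist_real_def abs_if)
  qed simp
  thus ?thesis by (rule lipschitz_on_continuous_on)
qed

lemma feasible_int: "feasible_schedule n m S \<Longrightarrow> \<forall>t. indic S j integrable_on {0..t}"
  by (simp add: feasible_schedule_def)

lemma hit_inf:
  assumes int: "\<forall>t. indic S j integrable_on {0..t}" and "0 \<le> T" and "B \<le> received S j T"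
  defines "X \<equiv> {t. 0 \<le> t \<and> B \<le> received S j t}"
  shows "Inf X \<in> X" "Inf X \<le> T" "\<And>t. t \<in> X \<Longrightarrow> Inf X \<le> t"
proof -
  have ne: "X \<noteq> {}" using assms unfolding X_def by auto
  have bdd: "bdd_below X" unfolding X_def by (rule bdd_belowI[of _ 0]) auto
  have cl: "closed X"
  proof -
    have "X = {0..} \<inter> received S j -` {B..}" unfolding X_def by auto
    moreover have "closed ({0..} \<inter> received S j -` {B..})"
      using received_cont[OF int, of UNIV] by (intro closed_Int closed_vimage) auto
    ultimately show ?thesis by simp
  qed
  show "Inf X \<in> X" by (rule closed_contains_Inf[OF ne bdd cl])
  show "\<And>t. t \<in> X \<Longrightarrow> Inf X \<le> t" using bdd by (auto intro: cInf_lower)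
  thus "Inf X \<le> T" using assms unfolding X_def by auto
qed


lemma rank_lemma:
  fixes R :: "'a \<Rightarrow> 'a \<Rightarrow> bool"
  assumes fin: "finite A"
    and irr: "\<And>a. a \<in> A \<Longrightarrow> \<not> R a a"
    and trn: "\<And>a b c. a \<in> A \<Longrightarrow> b \<in> A \<Longrightarrow> c \<in> A \<Longrightarrow> R a b \<Longrightarrow> R b c \<Longrightarrow> R a c"
    and tot: "\<And>a b. a \<in> A \<Longrightarrow> b \<in> A \<Longrightarrow> a \<noteq> b \<Longrightarrow> R a b \<or> R b a"
  shows "\<And>a b. a \<in> A \<Longrightarrow> b \<in> A \<Longrightarrow> R a b \<Longrightarrow> card {c \<in> A. R c a} < card {c \<in> A. R c b}"
    and "inj_on (\<lambda>a. card {c \<in> A. R c a}) A"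
    and "card {a \<in> A. card {c \<in> A. R c a} < k} = min k (card A)"
proof -
  define rk where "rk = (\<lambda>a. card {c \<in> A. R c a})"
  have lt: "rk a < rk b" if "a \<in> A" "b \<in> A" "R a b" for a b
  proof -
    have "{c \<in> A. R c a} \<subset> {c \<in> A. R c b}"
      using that trn irr by blast
    thus ?thesis unfolding rk_def using fin by (intro psubset_card_mono) auto
  qed
  thus "\<And>a b. a \<in> A \<Longrightarrow> b \<in> A \<Longrightarrow> R a b \<Longrightarrow> card {c \<in> A. R c a} < card {c \<in> A. R c b}"
    unfolding rk_def by blast
  have inj: "inj_on rk A"
  proof (rule inj_onI)
    fix a b assume "a \<in> A" "b \<in> A" "rk a = rk b"
    thus "a = b" using lt tot by (metis less_irrefl)
  qed
  thus "inj_on (\<lambda>a. card {c \<in> A. R c a}) A" unfolding rk_def .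
  have bnd: "rk a < card A" if "a \<in> A" for a
  proof -
    have "{c \<in> A. R c a} \<subset> A" using that irr by blast
    thus ?thesis unfolding rk_def using fin by (intro psubset_card_mono) auto
  qed
  have img: "rk ` A = {..<card A}"
  proof (rule card_subset_eq)
    show "rk ` A \<subseteq> {..<card A}" using bnd by auto
    show "card (rk ` A) = card {..<card A}" using card_image[OF inj] by simp
  qed simp
  have "rk ` {a \<in> A. rk a < k} = {x \<in> rk ` A. x < k}" by auto
  hence "rk ` {a \<in> A. rk a < k} = {..<min k (card A)}"
    using img by auto
  moreover have "inj_on rk {a \<in> A. rk a < k}" using inj by (rule inj_on_subset) auto
  ultimately have "card {a \<in> A. rk a < k} = min k (card A)"
    by (metis card_image card_lessThan)
  thus "card {a \<in> A. card {c \<in> A. R c a} < k} = min k (card A)" unfolding rk_def .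
qed

lemma sum_distinct_nat_lower:
  fixes X :: "nat set"
  assumes "finite X"
  shows "card X * (card X - 1) \<le> 2 * \<Sum> X"
  using assms
proof (induction "card X" arbitrary: X)
  case 0 thus ?case by simp
next
  case (Suc k)
  hence ne: "X \<noteq> {}" by auto
  define M where "M = Max X"
  have MX: "M \<in> X" unfolding M_def using Suc ne by auto
  have ck: "card (X - {M}) = k" using Suc MX by simp
  have IH: "k * (k - 1) \<le> 2 * \<Sum> (X - {M})" using Suc ck by (metis finite_Diff)
  have "X \<subseteq> {..M}" unfolding M_def using Suc by auto
  hence "card X \<le> Suc M" by (metis card_atMost card_mono finite_atMost)
  hence Mk: "k \<le> M" using Suc by simp
  have "\<Sum> X = M + \<Sum> (X - {M})" using Suc MX by (simp add: sum.remove)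
  hence "2 * \<Sum> X \<ge> 2 * k + k * (k - 1)" using IH Mk by linarith
  moreover have "2 * k + k * (k - 1) = Suc k * k" by (cases k) auto
  moreover have "card X * (card X - 1) = Suc k * k" using Suc.hyps(2)[symmetric] by simp
  ultimately show ?case by linarith
qed

lemma opt_point:
  fixes U W :: "nat set" and c :: "nat \<Rightarrow> nat" and m :: nat
  assumes fin: "finite U" and WU: "W \<subseteq> U" and cw: "card W \<le> m" and inj: "inj_on c U"
    and cb: "\<forall>j\<in>U. c j < card U"
  shows "(\<Sum>j\<in>W. real (2 * c j + m)) \<le> 2 * real m * real (card U)"
proof -
  define N where "N = card U"
  define w where "w = card W"
  have finW: "finite W" using fin WU finite_subset by blast
  have wN: "w \<le> N" unfolding w_def N_def using fin WU card_mono by blast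
  define d where "d = (\<lambda>j. N - 1 - c j)"
  have injd: "inj_on d W"
  proof (rule inj_onI)
    fix a b assume "a \<in> W" "b \<in> W" "d a = d b"
    moreover have "c a < N" "c b < N" using cb WU \<open>a \<in> W\<close> \<open>b \<in> W\<close> N_def by auto
    ultimately have "c a = c b" unfolding d_def by linarith
    thus "a = b" using inj \<open>a \<in> W\<close> \<open>b \<in> W\<close> WU by (meson inj_onD subsetD)
  qed
  have "card (d ` W) * (card (d ` W) - 1) \<le> 2 * \<Sum> (d ` W)"
    using finW by (intro sum_distinct_nat_lower) auto
  hence "w * (w - 1) \<le> 2 * (\<Sum>j\<in>W. d j)"
    using card_image[OF injd] sum.reindex[OF injd, of id] unfolding w_def by simp
  hence "real (w * (w - 1)) \<le> real (2 * (\<Sum>j\<in>W. d j))" by (simp only: of_nat_le_iff)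
  moreover have "real (w*(w-1)) = real w * (real w - 1)" by (cases w) (auto simp: algebra_simps)
  moreover have "real (2 * (\<Sum>j\<in>W. d j)) = 2 * (\<Sum>j\<in>W. real (d j))" by simp
  ultimately have A: "real w * (real w - 1) \<le> 2 * (\<Sum>j\<in>W. real (d j))" by (simp only:)
  have dj: "real (d j) = real N - 1 - real (c j)" if "j \<in> W" for j
  proof -
    have "c j < N" using cb that WU unfolding N_def by auto
    thus ?thesis unfolding d_def by (simp add: of_nat_diff)
  qed
  have "(\<Sum>j\<in>W. real (2 * c j + m)) = (\<Sum>j\<in>W. 2 * (real N - 1 - real (d j)) + real m)"
    by (intro sum.cong) (auto simp: dj)
  also have "\<dots> = real w * (2 * real N - 2 + real m) - 2 * (\<Sum>j\<in>W. real (d j))"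
    by (simp add: sum.distrib sum_subtractf sum_distrib_left sum_distrib_right w_def algebra_simps)
  also have "\<dots> \<le> real w * (2 * real N - 2 + real m) - real w * (real w - 1)"
    using A by linarith
  also have "\<dots> = real w * (2 * real N + real m - 1 - real w)" by (simp add: algebra_simps)
  also have "\<dots> \<le> 2 * real m * real N"
  proof (cases "w = 0")
    case True thus ?thesis by simp
  next
    case w0: False
  show ?thesis
  proof (cases "N \<ge> m")
    case True
    have "real w * (2 * real N + real m - 1 - real w) \<le> real m * (2 * real N - 1)"
    proof -
      have "0 \<le> (real m - real w) * (2 * real N - 1 - real w)"
        using cw wN True w0 unfolding w_def by (intro mult_nonneg_nonneg) auto
      thus ?thesis by (simp add: algebra_simps)
    qed
    also have "\<dots> \<le> 2 * real m * real N" by (simp add: algebra_simps)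
    finally show ?thesis .
  next
    case False
    have "real w * (2 * real N + real m - 1 - real w) \<le> real N * (real N + real m - 1)"
    proof -
      have "0 \<le> (real N - real w) * (real N + real m - 1 - real w)"
        using cw wN False unfolding w_def by (intro mult_nonneg_nonneg) auto
      thus ?thesis by (simp add: algebra_simps)
    qed
    also have "\<dots> \<le> 2 * real m * real N"
    proof -
      have "0 \<le> real N * (real m + 1 - real N)" using False by auto
      thus ?thesis by (simp add: algebra_simps)
    qed
    finally show ?thesis .
  qed
  qed
  finally show ?thesis unfolding N_def .
qed


definition qv :: "real \<Rightarrow> (nat \<Rightarrow> real) \<Rightarrow> nat \<Rightarrow> real \<Rightarrow> int" where
  "qv \<delta> ph j x = (if x < thr \<delta> (kinit \<delta> ph j + 1) then kinit \<delta> ph j else \<lfloor>log (1 + \<delta>) x\<rfloor>)"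

lemma qidx_qv: "qidx \<delta> ph S j t = qv \<delta> ph j (received S j t)"
  by (simp add: qidx_def qv_def)

context
  fixes \<delta> :: real
  assumes dpos: "\<delta> > 0"
begin

lemma thr_pos: "0 < thr \<delta> i"
  using dpos by (simp add: thr_def)

lemma thr_le_iff: "thr \<delta> i \<le> thr \<delta> i' \<longleftrightarrow> i \<le> i'"
  using dpos by (simp add: thr_def)

lemma thr_less_iff: "thr \<delta> i < thr \<delta> i' \<longleftrightarrow> i < i'"
  using thr_le_iff[of i' i] by linarith

lemma thr_succ: "thr \<delta> (i + 1) = (1 + \<delta>) * thr \<delta> i"
  using dpos by (simp add: thr_def powr_add)

lemma thr_le_x_iff: "0 < x \<Longrightarrow> thr \<delta> i \<le> x \<longleftrightarrow> real_of_int i \<le> log (1 + \<delta>) x"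
proof -
  assume x: "0 < x"
  have "x = (1 + \<delta>) powr (log (1 + \<delta>) x)" using x dpos by simp
  hence "thr \<delta> i \<le> x \<longleftrightarrow> (1 + \<delta>) powr (real_of_int i) \<le> (1 + \<delta>) powr (log (1 + \<delta>) x)"
    by (simp add: thr_def)
  also have "\<dots> \<longleftrightarrow> real_of_int i \<le> log (1 + \<delta>) x" using dpos by (simp add: powr_le_cancel_iff)
  finally show ?thesis .
qed

lemma thr_kinit_le: fixes ph :: "nat \<Rightarrow> real" and j :: nat
  shows "0 < ph j \<Longrightarrow> thr \<delta> (kinit \<delta> ph j) \<le> ph j"
  by (simp add: thr_le_x_iff kinit_def)

lemma Q2: fixes ph :: "nat \<Rightarrow> real" and j :: nat and i :: int and x :: real
  assumes "kinit \<delta> ph j \<le> i"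
  shows "qv \<delta> ph j x \<le> i \<longleftrightarrow> x < thr \<delta> (i + 1)"
proof (cases "x < thr \<delta> (kinit \<delta> ph j + 1)")
  case True
  moreover have "thr \<delta> (kinit \<delta> ph j + 1) \<le> thr \<delta> (i + 1)" using assms by (simp add: thr_le_iff)
  ultimately show ?thesis using assms by (simp add: qv_def)
next
  case False
  hence x: "0 < x" using thr_pos[of "kinit \<delta> ph j + 1"] by linarith
  have "qv \<delta> ph j x = \<lfloor>log (1 + \<delta>) x\<rfloor>" using False by (simp add: qv_def)
  hence "qv \<delta> ph j x \<le> i \<longleftrightarrow> log (1 + \<delta>) x < real_of_int i + 1" by (simp add: floor_le_iff)
  also have "\<dots> \<longleftrightarrow> \<not> thr \<delta> (i + 1) \<le> x" using thr_le_x_iff[OF x, of "i+1"] by auto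
  finally show ?thesis by (simp add: not_le)
qed

lemma Q1: fixes ph :: "nat \<Rightarrow> real" and j :: nat and x :: real
  shows "kinit \<delta> ph j \<le> qv \<delta> ph j x"
proof (cases "x < thr \<delta> (kinit \<delta> ph j + 1)")
  case True thus ?thesis by (simp add: qv_def)
next
  case False
  hence x: "0 < x" using thr_pos[of "kinit \<delta> ph j + 1"] by linarith
  have "real_of_int (kinit \<delta> ph j + 1) \<le> log (1 + \<delta>) x"
    using False thr_le_x_iff[OF x, of "kinit \<delta> ph j + 1"] by linarith
  thus ?thesis using False by (simp add: qv_def le_floor_iff)
qed

lemma Q4: fixes ph :: "nat \<Rightarrow> real" and j :: nat and x :: real
  shows "x < thr \<delta> (qv \<delta> ph j x + 1)"
  using Q2[OF Q1[of ph j x], of x] by simp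

lemma Q3: fixes ph :: "nat \<Rightarrow> real" and j :: nat and x y :: real
  shows "x \<le> y \<Longrightarrow> qv \<delta> ph j x \<le> qv \<delta> ph j y"
  using Q2[OF Q1[of ph j y], of x] Q4[of y ph j] by simp

lemma Q5: fixes ph :: "nat \<Rightarrow> real" and j :: nat and i :: int and x :: real
  assumes "kinit \<delta> ph j < i"
  shows "i \<le> qv \<delta> ph j x \<longleftrightarrow> thr \<delta> i \<le> x"
  using Q2[of ph j "i - 1" x] assms by force

lemma Q6: fixes ph :: "nat \<Rightarrow> real" and j :: nat and x :: real
  assumes "0 < ph j" shows "thr \<delta> (qv \<delta> ph j x) \<le> max (ph j) x"
proof (cases "qv \<delta> ph j x = kinit \<delta> ph j")
  case True thus ?thesis using thr_kinit_le[of ph j] assms by simp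
next
  case False
  hence "kinit \<delta> ph j < qv \<delta> ph j x" using Q1[of ph j x] by simp
  thus ?thesis using Q5[of ph j "qv \<delta> ph j x" x] by simp
qed

lemma Q_eq: fixes ph :: "nat \<Rightarrow> real" and j :: nat and x y :: real
  assumes "x \<le> y" "y < thr \<delta> (qv \<delta> ph j x + 1)"
  shows "qv \<delta> ph j y = qv \<delta> ph j x"
  using Q2[OF Q1[of ph j x], of y] Q3[OF assms(1), of ph j] assms(2) by simp

lemma Q_thr: fixes ph :: "nat \<Rightarrow> real" and j :: nat and i :: int
  assumes "kinit \<delta> ph j < i" shows "qv \<delta> ph j (thr \<delta> i) = i"
  using Q5[OF assms, of "thr \<delta> i"] Q2[of ph j i "thr \<delta> i"] assms thr_less_iff[of i "i+1"] by auto

end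


lemma thr_less_x_iff: "0 < \<delta> \<Longrightarrow> 0 < x \<Longrightarrow> thr \<delta> i < x \<longleftrightarrow> real_of_int i < log (1 + \<delta>) x"
proof -
  assume d: "0 < \<delta>" and x: "0 < x"
  have "x = (1 + \<delta>) powr (log (1 + \<delta>) x)" using x d by simp
  hence "thr \<delta> i < x \<longleftrightarrow> (1 + \<delta>) powr (real_of_int i) < (1 + \<delta>) powr (log (1 + \<delta>) x)"
    by (simp add: thr_def)
  also have "\<dots> \<longleftrightarrow> real_of_int i < log (1 + \<delta>) x" using d by (simp add: powr_less_cancel_iff)
  finally show ?thesis .
qed

locale pmlf =
  fixes n m :: nat and \<delta> :: real and p ph :: "nat \<Rightarrow> real"
    and S :: "real \<Rightarrow> nat set" and pos :: "nat \<Rightarrow> int \<Rightarrow> nat"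
  assumes dpos: "\<delta> > 0" and m1: "m \<ge> 1"
    and pj: "\<And>j. j < n \<Longrightarrow> 1 \<le> p j \<and> 0 < ph j \<and> ph j \<le> p j"
    and pm: "is_PMLF n m \<delta> p ph S pos"
begin

lemma feas: "feasible_schedule n m S"
  using pm by (simp add: is_PMLF_def)

lemma int: "\<forall>t. indic S j integrable_on {0..t}"
  using feas by (simp add: feasible_schedule_def)

lemma S_sub: "S t \<subseteq> {..<n}"
  using feas by (simp add: feasible_schedule_def)

lemma rule: "0 \<le> t \<Longrightarrow> S t = {j. available n p S j t \<and>
    card {j'. available n p S j' t \<and> prio_less \<delta> ph S pos j' j t} < m}"
  using pm by (simp add: is_PMLF_def)

lemma S_avail: "0 \<le> t \<Longrightarrow> j \<in> S t \<Longrightarrow> available n p S j t"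
  using rule by blast

lemma rec_le_p: assumes k: "k < n" shows "received S k t \<le> p k"
proof (rule ccontr)
  assume "\<not> received S k t \<le> p k"
  hence gt: "p k < received S k t" by simp
  have t0: "0 \<le> t"
  proof (rule ccontr)
    assume "\<not> 0 \<le> t"
    hence "received S k t = 0" by (simp add: received_neg)
    thus False using gt pj[OF k] by simp
  qed
  obtain s where s: "0 \<le> s" "s \<le> t" "received S k s = p k"
    using IVT'[of "received S k" 0 "p k" t] received_cont[OF int] pj[OF k] gt t0 by auto
  have "integral {s..t} (indic S k) = integral {s..t} (\<lambda>_. 0)"
  proof (rule integral_cong)
    fix u assume u: "u \<in> {s..t}"
    hence "received S k s \<le> received S k u" by (intro received_mono[OF int]) (use s in auto)
    hence "p k \<le> received S k u" using s by simp
    hence "k \<notin> S u" using S_avail[of u k] s u by (auto simp: available_def)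
    thus "indic S k u = 0" by (simp add: indic_def)
  qed
  hence "received S k t - received S k s = 0" using received_diff[OF int s(1) s(2)] by simp
  thus False using gt s by simp
qed

lemma pos_inj: "inj_on (\<lambda>j. pos j i) {..<n}"
  using pm by (simp add: is_PMLF_def valid_positions_def)

lemma prio_irr: "\<not> prio_less \<delta> ph S pos a a t"
  by (simp add: prio_less_def)

lemma prio_trans: "prio_less \<delta> ph S pos a b t \<Longrightarrow> prio_less \<delta> ph S pos b c t \<Longrightarrow> prio_less \<delta> ph S pos a c t"
  by (auto simp: prio_less_def)

lemma prio_tot: assumes "a < n" "b < n" "a \<noteq> b"
  shows "prio_less \<delta> ph S pos a b t \<or> prio_less \<delta> ph S pos b a t"
proof (cases "qidx \<delta> ph S a t = qidx \<delta> ph S b t")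
  case True
  have "pos a (qidx \<delta> ph S a t) \<noteq> pos b (qidx \<delta> ph S a t)"
    using pos_inj[of "qidx \<delta> ph S a t"] assms by (auto dest: inj_onD)
  thus ?thesis using True by (auto simp: prio_less_def)
next
  case False thus ?thesis by (auto simp: prio_less_def)
qed

lemma many_ahead:
  assumes t: "0 \<le> t" and ja: "available n p S j t" and jS: "j \<notin> S t"
  shows "m \<le> card {k \<in> S t. prio_less \<delta> ph S pos k j t}"
proof -
  define A where "A = {k. available n p S k t}"
  define R where "R = (\<lambda>a b. prio_less \<delta> ph S pos a b t)"
  have An: "A \<subseteq> {..<n}" by (auto simp: A_def available_def)
  have finA: "finite A" using An finite_subset by blast
  have irr: "\<And>a. a \<in> A \<Longrightarrow> \<not> R a a" by (simp add: R_def prio_irr)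
  have trn: "\<And>a b c. a \<in> A \<Longrightarrow> b \<in> A \<Longrightarrow> c \<in> A \<Longrightarrow> R a b \<Longrightarrow> R b c \<Longrightarrow> R a c"
    unfolding R_def by (rule prio_trans)
  have tot: "\<And>a b. a \<in> A \<Longrightarrow> b \<in> A \<Longrightarrow> a \<noteq> b \<Longrightarrow> R a b \<or> R b a"
    unfolding R_def using An prio_tot by blast
  have rl1: "\<And>a b. a \<in> A \<Longrightarrow> b \<in> A \<Longrightarrow> R a b \<Longrightarrow> card {c \<in> A. R c a} < card {c \<in> A. R c b}"
    by (rule rank_lemma(1)[where A=A and R=R]) (use finA irr trn tot in blast)+
  have rl3: "\<And>k. card {a \<in> A. card {c \<in> A. R c a} < k} = min k (card A)"
    by (rule rank_lemma(3)[where A=A and R=R]) (use finA irr trn tot in blast)+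
  have St: "S t = {a \<in> A. card {c \<in> A. R c a} < m}"
    using rule[OF t] by (simp add: A_def R_def)
  have jA: "j \<in> A" using ja by (simp add: A_def)
  have nj: "\<not> card {c \<in> A. R c j} < m" using jS jA St by blast
  have "{c \<in> A. R c j} \<subset> A" using jA irr by blast
  hence "card {c \<in> A. R c j} < card A" using finA by (intro psubset_card_mono) auto
  hence cardS: "card (S t) = m" using rl3[of m] St nj by simp
  have "S t \<subseteq> {k \<in> S t. R k j}"
  proof
    fix a assume aS: "a \<in> S t"
    hence aA: "a \<in> A" and ra: "card {c \<in> A. R c a} < m" using St by auto
    have "a \<noteq> j" using aS jS by auto
    hence "R a j \<or> R j a" using tot aA jA by blast
    moreover have "\<not> R j a" using rl1[OF jA aA] ra nj by fastforce
    ultimately show "a \<in> {k \<in> S t. R k j}" using aS by auto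
  qed
  hence "card (S t) \<le> card {k \<in> S t. R k j}"
    using finite_subset[OF S_sub] by (intro card_mono) auto
  thus ?thesis using cardS unfolding R_def by simp
qed

lemma ahead_small:
  assumes pr: "prio_less \<delta> ph S pos k j t" and ja: "available n p S j t"
  shows "received S k t < (1 + \<delta>) * p j"
proof -
  have j: "j < n" "received S j t < p j" using ja by (auto simp: available_def)
  have le: "qidx \<delta> ph S k t \<le> qidx \<delta> ph S j t" using pr by (auto simp: prio_less_def)
  have "received S k t < thr \<delta> (qidx \<delta> ph S k t + 1)"
    unfolding qidx_qv by (rule Q4[OF dpos])
  also have "\<dots> \<le> thr \<delta> (qidx \<delta> ph S j t + 1)"
    using le by (simp add: thr_le_iff[OF dpos])
  also have "\<dots> = (1 + \<delta>) * thr \<delta> (qidx \<delta> ph S j t)" by (rule thr_succ[OF dpos])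
  also have "\<dots> \<le> (1 + \<delta>) * max (ph j) (received S j t)"
    unfolding qidx_qv using Q6[OF dpos, of ph j] pj[OF j(1)] dpos
    by (intro mult_left_mono) auto
  also have "\<dots> \<le> (1 + \<delta>) * p j"
    using pj[OF j(1)] j(2) dpos by (intro mult_left_mono) auto
  finally show ?thesis .
qed

lemma core:
  assumes j: "j < n" and T: "0 \<le> T" and rj: "received S j T < p j"
  shows "T \<le> received S j T + (\<Sum>k\<in>{..<n}-{j}. min (p k) ((1 + \<delta>) * p j)) / m"
proof -
  define B where "B = (1 + \<delta>) * p j"
  have Bpos: "0 < B" unfolding B_def using dpos pj[OF j] by auto
  define X where "X = (\<lambda>k. {t. 0 \<le> t \<and> B \<le> received S k t})"
  define \<tau> where "\<tau> = (\<lambda>k. if B \<le> received S k T then Inf (X k) else T)"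
  have tau1: "0 \<le> \<tau> k \<and> \<tau> k \<le> T" for k
    using hit_inf[OF int T, of B k] T unfolding \<tau>_def X_def by auto
  have tau2: "received S k (\<tau> k) \<le> B" for k
  proof (cases "B \<le> received S k T")
    case True
    obtain s where s: "0 \<le> s" "s \<le> T" "received S k s = B"
      using IVT'[of "received S k" 0 B T] received_cont[OF int] True T Bpos by auto
    have "Inf (X k) \<le> s" using hit_inf(3)[OF int T True] s unfolding X_def by auto
    hence "received S k (Inf (X k)) \<le> received S k s" by (rule received_mono[OF int])
    thus ?thesis using True s unfolding \<tau>_def by simp
  next
    case False thus ?thesis unfolding \<tau>_def by simp
  qed
  have tau3: "t \<le> \<tau> k" if "t \<in> {0..T}" "received S k t < B" for k t
  proof (cases "B \<le> received S k T")
    case True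
    show ?thesis
    proof (rule ccontr)
      assume "\<not> t \<le> \<tau> k"
      hence "Inf (X k) \<le> t" using True unfolding \<tau>_def by simp
      hence "received S k (Inf (X k)) \<le> received S k t" by (rule received_mono[OF int])
      moreover have "B \<le> received S k (Inf (X k))" using hit_inf(1)[OF int T True] unfolding X_def by simp
      ultimately show False using that by simp
    qed
  next
    case False thus ?thesis using that unfolding \<tau>_def by simp
  qed
  define g where "g = (\<lambda>k t. if t \<in> {0..\<tau> k} then indic S k t else 0)"
  have sub: "{0..\<tau> k} \<inter> {0..T} = {0..\<tau> k}" for k using tau1[of k] by auto
  have gint: "g k integrable_on {0..T}" for k
    unfolding g_def integrable_restrict_Int sub[of k] using int by blast
  have gI: "integral {0..T} (g k) = received S k (\<tau> k)" for k
    unfolding g_def Henstock_Kurzweil_Integration.integral_restrict_Int sub received_def ..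
  have gB: "integral {0..T} (g k) \<le> min (p k) B" if "k < n" for k
    using gI tau2[of k] rec_le_p[OF that, of "\<tau> k"] by simp
  have g0: "0 \<le> g k t" for k t unfolding g_def by simp
  have pw: "1 \<le> indic S j t + (\<Sum>k\<in>{..<n}-{j}. g k t) / m" if t: "t \<in> {0..T}" for t
  proof -
    have ja: "available n p S j t"
      using received_mono[OF int, of t T j] t rj j by (auto simp: available_def)
    show ?thesis
    proof (cases "j \<in> S t")
      case True
      have "0 \<le> (\<Sum>k\<in>{..<n}-{j}. g k t) / m" using g0 by (simp add: sum_nonneg)
      thus ?thesis using True by (simp add: indic_def)
    next
      case False
      define K where "K = {k \<in> S t. prio_less \<delta> ph S pos k j t}"
      have mK: "m \<le> card K" unfolding K_def using many_ahead[OF _ ja False] t by simp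
      have Ksub: "K \<subseteq> {..<n}-{j}" using S_sub False unfolding K_def by auto
      have "real (card K) = (\<Sum>k\<in>K. g k t)"
      proof -
        have "g k t = 1" if "k \<in> K" for k
        proof -
          have "received S k t < B" unfolding B_def
            using ahead_small[OF _ ja] that unfolding K_def by auto
          hence "t \<le> \<tau> k" by (rule tau3[OF t])
          thus ?thesis using that t unfolding K_def g_def by (simp add: indic_def)
        qed
        thus ?thesis by simp
      qed
      also have "\<dots> \<le> (\<Sum>k\<in>{..<n}-{j}. g k t)"
        using Ksub g0 by (intro sum_mono2) auto
      finally have "real m \<le> (\<Sum>k\<in>{..<n}-{j}. g k t)" using mK by linarith
      hence "1 \<le> (\<Sum>k\<in>{..<n}-{j}. g k t) / m" using m1 by simp
      thus ?thesis by (simp add: indic_def)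
    qed
  qed
  have intj: "indic S j integrable_on {0..T}" using int by blast
  have intsum: "(\<lambda>t. (\<Sum>k\<in>{..<n}-{j}. g k t) / m) integrable_on {0..T}"
    using gint by (intro integrable_on_divide integrable_sum) auto
  have "T = integral {0..T} (\<lambda>_. 1::real)" using T by simp
  also have "\<dots> \<le> integral {0..T} (\<lambda>t. indic S j t + (\<Sum>k\<in>{..<n}-{j}. g k t) / m)"
    using pw intj intsum by (intro integral_le integrable_add) auto
  also have "\<dots> = received S j T + integral {0..T} (\<lambda>t. (\<Sum>k\<in>{..<n}-{j}. g k t) / m)"
    using intj intsum by (simp add: integral_add received_def)
  also have "integral {0..T} (\<lambda>t. (\<Sum>k\<in>{..<n}-{j}. g k t) / m) = (\<Sum>k\<in>{..<n}-{j}. integral {0..T} (g k)) / m"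
    using gint by (simp add: integral_divide integral_sum)
  also have "\<dots> \<le> (\<Sum>k\<in>{..<n}-{j}. min (p k) B) / m"
    using gB m1 by (intro divide_right_mono sum_mono) auto
  finally show ?thesis unfolding B_def by simp
qed

definition Kb where "Kb j = p j + (\<Sum>k\<in>{..<n}-{j}. min (p k) ((1 + \<delta>) * p j)) / m"

lemma Kb_ge: "j < n \<Longrightarrow> p j \<le> Kb j"
proof -
  assume j: "j < n"
  have "\<forall>k\<in>{..<n}-{j}. 0 \<le> min (p k) ((1 + \<delta>) * p j)"
  proof
    fix k assume "k \<in> {..<n}-{j}"
    hence "0 \<le> p k" using pj[of k] by auto
    moreover have "0 \<le> (1 + \<delta>) * p j" using pj[OF j] dpos by simp
    ultimately show "0 \<le> min (p k) ((1 + \<delta>) * p j)" by simp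
  qed
  hence "0 \<le> (\<Sum>k\<in>{..<n}-{j}. min (p k) ((1 + \<delta>) * p j)) / m"
    by (intro divide_nonneg_nonneg sum_nonneg) auto
  thus ?thesis unfolding Kb_def by simp
qed

lemma completes_j: assumes j: "j < n" shows "completes S p j"
proof -
  define T where "T = Kb j + 1"
  have T0: "0 \<le> T" using Kb_ge[OF j] pj[OF j] unfolding T_def by simp
  have "p j \<le> received S j T"
  proof (rule ccontr)
    assume "\<not> p j \<le> received S j T"
    hence "T \<le> received S j T + (\<Sum>k\<in>{..<n}-{j}. min (p k) ((1 + \<delta>) * p j)) / m"
      using core[OF j T0] by simp
    thus False using \<open>\<not> p j \<le> received S j T\<close> unfolding T_def Kb_def by simp
  qed
  thus ?thesis unfolding completes_def using T0 by blast
qed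

lemma compl_le: assumes j: "j < n" shows "compl_time S p j \<le> Kb j"
proof (rule ccontr)
  define Y where "Y = {t. 0 \<le> t \<and> p j \<le> received S j t}"
  assume "\<not> compl_time S p j \<le> Kb j"
  hence gt: "Kb j < Inf Y" unfolding compl_time_def Y_def by simp
  define T where "T = (Kb j + Inf Y) / 2"
  have T0: "0 \<le> T" using Kb_ge[OF j] pj[OF j] gt unfolding T_def by simp
  have "received S j T < p j"
  proof (rule ccontr)
    assume "\<not> received S j T < p j"
    hence "T \<in> Y" using T0 unfolding Y_def by simp
    hence "Inf Y \<le> T" by (rule cInf_lower) (auto simp: Y_def intro: bdd_belowI[of _ 0])
    thus False using gt unfolding T_def by simp
  qed
  hence "T \<le> received S j T + (\<Sum>k\<in>{..<n}-{j}. min (p k) ((1 + \<delta>) * p j)) / m"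
    using core[OF j T0] by simp
  hence "T < Kb j" using \<open>received S j T < p j\<close> unfolding Kb_def by linarith
  moreover have "Kb j < T" unfolding T_def using gt by simp
  ultimately show False by simp
qed

lemma rec_lt_of_compl: assumes "0 \<le> t" "t < compl_time S p j" shows "received S j t < p j"
proof (rule ccontr)
  assume "\<not> received S j t < p j"
  hence "t \<in> {t. 0 \<le> t \<and> p j \<le> received S j t}" using assms by simp
  hence "compl_time S p j \<le> t" unfolding compl_time_def
    by (rule cInf_lower) (auto intro: bdd_belowI[of _ 0])
  thus False using assms by simp
qed

lemma qidx_mono: "a \<le> b \<Longrightarrow> qidx \<delta> ph S j a \<le> qidx \<delta> ph S j b"
  unfolding qidx_qv by (intro Q3[OF dpos] received_mono[OF int])

lemma preempt_jump:
  assumes j: "j < n" and pr: "preempt_at S p j t"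
  shows "\<forall>\<epsilon>>0. \<exists>u. t - \<epsilon> < u \<and> u < t \<and> qidx \<delta> ph S j u < qidx \<delta> ph S j t"
proof (rule ccontr)
  assume "\<not> ?thesis"
  then obtain \<epsilon>0 where e0: "\<epsilon>0 > 0"
    and "\<forall>u. t - \<epsilon>0 < u \<and> u < t \<longrightarrow> \<not> qidx \<delta> ph S j u < qidx \<delta> ph S j t"
    by blast
  hence e0u: "\<And>u. t - \<epsilon>0 < u \<Longrightarrow> u < t \<Longrightarrow> qidx \<delta> ph S j t \<le> qidx \<delta> ph S j u"
    by (simp add: not_less)
  have t0: "0 < t" and tc: "t < compl_time S p j"
    and left: "\<exists>\<epsilon>>0. \<forall>s. t - \<epsilon> < s \<and> s < t \<longrightarrow> j \<in> S s"
    and right: "\<forall>\<epsilon>>0. \<exists>s. t \<le> s \<and> s < t + \<epsilon> \<and> j \<notin> S s"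
    using pr by (auto simp: preempt_at_def)
  obtain \<epsilon>1 where e1: "\<epsilon>1 > 0" "\<And>s. t - \<epsilon>1 < s \<Longrightarrow> s < t \<Longrightarrow> j \<in> S s" using left by auto
  define i0 where "i0 = qidx \<delta> ph S j t"
  define rt where "rt = received S j t"
  have rtp: "rt < p j" unfolding rt_def using rec_lt_of_compl t0 tc by simp
  have rti: "rt < thr \<delta> (i0 + 1)" unfolding i0_def rt_def qidx_qv by (rule Q4[OF dpos])
  define \<eta> where "\<eta> = min (thr \<delta> (i0 + 1) - rt) (p j - rt)"
  have eta: "\<eta> > 0" unfolding \<eta>_def using rtp rti by simp
  obtain s where s: "t \<le> s" "s < t + \<eta>" "j \<notin> S s" using right eta by auto
  have rs: "received S j s - rt \<le> s - t" "rt \<le> received S j s"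
    using received_lip[OF int s(1), of j] unfolding rt_def by auto
  have qs: "qidx \<delta> ph S j s = i0"
  proof -
    have "received S j s < thr \<delta> (qv \<delta> ph j rt + 1)"
      using rs s(2) unfolding \<eta>_def i0_def rt_def qidx_qv by simp
    thus ?thesis unfolding i0_def qidx_qv rt_def[symmetric] by (rule Q_eq[OF dpos rs(2)])
  qed
  have as: "available n p S j s" using rs s(2) j unfolding \<eta>_def available_def by simp
  define u where "u = t - min (min \<epsilon>0 \<epsilon>1) t / 2"
  have u: "0 < u" "u < t" "t - \<epsilon>0 < u" "t - \<epsilon>1 < u"
    unfolding u_def using e0 e1(1) t0 by (auto simp: min_def)
  have ju: "j \<in> S u" using e1(2) u by simp
  have qu: "qidx \<delta> ph S j u = i0"
    using e0u[OF u(3) u(2)] qidx_mono[of u t j] u(2) unfolding i0_def by simp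
  have c1: "card {k. available n p S k u \<and> prio_less \<delta> ph S pos k j u} < m"
    using ju rule[of u] u by auto
  have c2: "m \<le> card {k \<in> S s. prio_less \<delta> ph S pos k j s}"
    using many_ahead[OF _ as s(3)] s t0 by simp
  have "{k \<in> S s. prio_less \<delta> ph S pos k j s} \<subseteq> {k. available n p S k u \<and> prio_less \<delta> ph S pos k j u}"
  proof
    fix k assume k: "k \<in> {k \<in> S s. prio_less \<delta> ph S pos k j s}"
    have ak: "available n p S k s" using S_avail[of s k] k s t0 by simp
    have us: "u \<le> s" using u s by simp
    have "received S k u \<le> received S k s" using received_mono[OF int us] .
    hence aku: "available n p S k u" using ak by (auto simp: available_def)
    have qk: "qidx \<delta> ph S k u \<le> qidx \<delta> ph S k s" by (rule qidx_mono[OF us])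
    have "prio_less \<delta> ph S pos k j u" using k qk qs qu by (auto simp: prio_less_def)
    thus "k \<in> {k. available n p S k u \<and> prio_less \<delta> ph S pos k j u}" using aku by simp
  qed
  moreover have "finite {k. available n p S k u \<and> prio_less \<delta> ph S pos k j u}"
    by (rule finite_subset[of _ "{..<n}"]) (auto simp: available_def)
  ultimately have "card {k \<in> S s. prio_less \<delta> ph S pos k j s} \<le> card {k. available n p S k u \<and> prio_less \<delta> ph S pos k j u}"
    by (rule card_mono[rotated])
  thus False using c1 c2 by simp
qed

lemma preempt_props:
  assumes j: "j < n" and pr: "preempt_at S p j t"
  shows "kinit \<delta> ph j < qidx \<delta> ph S j t" "thr \<delta> (qidx \<delta> ph S j t) < p j"
proof -
  obtain u where "qidx \<delta> ph S j u < qidx \<delta> ph S j t"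
    using preempt_jump[OF j pr] by (meson zero_less_one)
  moreover have "kinit \<delta> ph j \<le> qidx \<delta> ph S j u" unfolding qidx_qv by (rule Q1[OF dpos])
  ultimately show k: "kinit \<delta> ph j < qidx \<delta> ph S j t" by simp
  have "thr \<delta> (qidx \<delta> ph S j t) \<le> received S j t"
    using Q5[OF dpos k[unfolded qidx_qv], of "received S j t"] unfolding qidx_qv by simp
  moreover have "received S j t < p j"
    using pr rec_lt_of_compl by (auto simp: preempt_at_def)
  ultimately show "thr \<delta> (qidx \<delta> ph S j t) < p j" by simp
qed

lemma preempt_inj: assumes j: "j < n" shows "inj_on (\<lambda>t. qidx \<delta> ph S j t) {t. preempt_at S p j t}"
proof -
  have ne: "qidx \<delta> ph S j a \<noteq> qidx \<delta> ph S j b" if ab: "a < b" and pb: "preempt_at S p j b" for a b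
  proof -
    obtain u where u: "b - (b - a) < u" "u < b" "qidx \<delta> ph S j u < qidx \<delta> ph S j b"
      using preempt_jump[OF j pb] ab by (meson diff_gt_0_iff_gt)
    have "qidx \<delta> ph S j a \<le> qidx \<delta> ph S j u" using u(1) by (intro qidx_mono) simp
    thus ?thesis using u(3) by simp
  qed
  show ?thesis
  proof (rule inj_onI)
    fix a b assume "a \<in> {t. preempt_at S p j t}" "b \<in> {t. preempt_at S p j t}"
      and eq: "qidx \<delta> ph S j a = qidx \<delta> ph S j b"
    thus "a = b" using ne[of a b] ne[of b a] by (metis linorder_neqE_linordered_idom mem_Collect_eq)
  qed
qed

lemma fin_I: "finite {i. kinit \<delta> ph j < i \<and> thr \<delta> i < p j}"
proof (cases "0 < p j")
  case True
  have "{i. kinit \<delta> ph j < i \<and> thr \<delta> i < p j} \<subseteq> {kinit \<delta> ph j .. \<lceil>log (1 + \<delta>) (p j)\<rceil>}"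
    using thr_less_x_iff[OF dpos True] by (auto intro: less_imp_le simp: le_ceiling_iff)
  thus ?thesis by (rule finite_subset) simp
next
  case False
  have "\<not> thr \<delta> i < p j" for i using thr_pos[OF dpos, of i] False by linarith
  hence "{i. kinit \<delta> ph j < i \<and> thr \<delta> i < p j} = {}" by blast
  thus ?thesis by (metis finite.emptyI)
qed

lemma preempt_count:
  assumes j: "j < n"
  shows "finite {t. preempt_at S p j t}"
    and "num_preemptions S p j \<le> card {i. kinit \<delta> ph j < i \<and> thr \<delta> i < p j}"
proof -
  have img: "(\<lambda>t. qidx \<delta> ph S j t) ` {t. preempt_at S p j t} \<subseteq> {i. kinit \<delta> ph j < i \<and> thr \<delta> i < p j}"
    using preempt_props[OF j] by auto
  show "finite {t. preempt_at S p j t}"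
    using finite_subset[OF img fin_I] preempt_inj[OF j] finite_imageD by blast
  show "num_preemptions S p j \<le> card {i. kinit \<delta> ph j < i \<and> thr \<delta> i < p j}"
    unfolding num_preemptions_def using card_inj_on_le[OF preempt_inj[OF j] img fin_I] .
qed

end

lemma count_bound:
  assumes d: "0 < \<delta>" and ph: "0 < ph j" "ph j \<le> p j"
  shows "real (card {i. kinit \<delta> ph j < i \<and> thr \<delta> i < p j}) \<le> (\<delta> / ln (1 + \<delta>) + 1) * of_int \<lceil>ln (p j / ph j) / \<delta>\<rceil>"
proof -
  have pp: "0 < p j" using ph by simp
  define Lp where "Lp = log (1 + \<delta>) (p j)"
  define Lh where "Lh = log (1 + \<delta>) (ph j)"
  have sub: "{i. kinit \<delta> ph j < i \<and> thr \<delta> i < p j} \<subseteq> {kinit \<delta> ph j + 1 .. \<lceil>Lp\<rceil> - 1}"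
  proof
    fix i assume "i \<in> {i. kinit \<delta> ph j < i \<and> thr \<delta> i < p j}"
    hence "kinit \<delta> ph j < i" "real_of_int i < Lp" using thr_less_x_iff[OF d pp] unfolding Lp_def by auto
    thus "i \<in> {kinit \<delta> ph j + 1 .. \<lceil>Lp\<rceil> - 1}" by (auto simp: ceiling_less_iff less_ceiling_iff)
  qed
  have "card {i. kinit \<delta> ph j < i \<and> thr \<delta> i < p j} \<le> card {kinit \<delta> ph j + 1 .. \<lceil>Lp\<rceil> - 1}"
    by (rule card_mono[OF _ sub]) simp
  hence cb: "real (card {i. kinit \<delta> ph j < i \<and> thr \<delta> i < p j}) \<le> real (nat (\<lceil>Lp\<rceil> - 1 - \<lfloor>Lh\<rfloor>))"
    unfolding kinit_def Lh_def by simp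
  have ln1: "0 < ln (1 + \<delta>)" using d by simp
  have diff: "Lp - Lh = ln (p j / ph j) / ln (1 + \<delta>)"
    unfolding Lp_def Lh_def log_def using ph pp by (simp add: ln_div diff_divide_distrib)
  show ?thesis
  proof (cases "p j = ph j")
    case True
    hence "Lp = Lh" unfolding Lp_def Lh_def by simp
    hence "real_of_int (\<lceil>Lp\<rceil> - 1 - \<lfloor>Lh\<rfloor>) < 1"
      using ceiling_correct[of Lp] real_of_int_floor_gt_diff_one[of Lh] by linarith
    hence "\<lceil>Lp\<rceil> - 1 - \<lfloor>Lh\<rfloor> \<le> 0" by linarith
    hence "real (nat (\<lceil>Lp\<rceil> - 1 - \<lfloor>Lh\<rfloor>)) = 0" by simp
    thus ?thesis using cb True ph by simp
  next
    case False
    hence lt: "ph j < p j" using ph by simp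
    have lnpos: "0 < ln (p j / ph j)" using lt ph by simp
    define C where "C = real_of_int \<lceil>ln (p j / ph j) / \<delta>\<rceil>"
    have C1: "1 \<le> C" unfolding C_def using lnpos d by (simp add: one_le_ceiling)
    have C2: "ln (p j / ph j) / \<delta> \<le> C" unfolding C_def by simp
    have "real (nat (\<lceil>Lp\<rceil> - 1 - \<lfloor>Lh\<rfloor>)) \<le> Lp - Lh + 1"
    proof -
      have "real_of_int (\<lceil>Lp\<rceil> - 1 - \<lfloor>Lh\<rfloor>) < Lp - Lh + 1"
        using ceiling_correct[of Lp] real_of_int_floor_gt_diff_one[of Lh] by linarith
      moreover have "0 \<le> Lp - Lh + 1" using diff lnpos ln1 by (simp add: divide_pos_pos less_imp_le add_nonneg_nonneg)
      ultimately show ?thesis by linarith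
    qed
    also have "\<dots> = (\<delta> / ln (1 + \<delta>)) * (ln (p j / ph j) / \<delta>) + 1"
      using diff d ln1 by (simp add: field_simps)
    also have "\<dots> \<le> (\<delta> / ln (1 + \<delta>)) * C + C"
      using C1 C2 d ln1 by (intro add_mono mult_left_mono) auto
    also have "\<dots> = (\<delta> / ln (1 + \<delta>) + 1) * C" by (simp add: algebra_simps)
    finally show ?thesis using cb unfolding C_def by linarith
  qed
qed


lemma compl_props:
  assumes int: "\<forall>t. indic S j integrable_on {0..t}" and c: "completes S p j"
  shows "0 \<le> compl_time S p j" "p j \<le> received S j (compl_time S p j)"
proof -
  obtain T where T: "0 \<le> T" "p j \<le> received S j T" using c by (auto simp: completes_def)
  have "compl_time S p j \<in> {t. 0 \<le> t \<and> p j \<le> received S j t}"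
    unfolding compl_time_def by (rule hit_inf(1)[OF int T])
  thus "0 \<le> compl_time S p j" "p j \<le> received S j (compl_time S p j)" by auto
qed

lemma sym_split:
  fixes g :: "nat \<Rightarrow> nat \<Rightarrow> real"
  assumes irr: "\<And>a. \<not> R a a" and asym: "\<And>a b. R a b \<Longrightarrow> \<not> R b a"
    and tot: "\<And>a b. a \<noteq> b \<Longrightarrow> R a b \<or> R b a"
    and sym: "\<And>a b. g a b = g b a"
  shows "(\<Sum>j<n. \<Sum>k\<in>{..<n}-{j}. g j k) = 2 * (\<Sum>j<n. \<Sum>k\<in>{k\<in>{..<n}. R j k}. g j k)"
proof -
  have split: "(\<Sum>k\<in>{..<n}-{j}. g j k) = (\<Sum>k\<in>{k\<in>{..<n}. R j k}. g j k) + (\<Sum>k\<in>{k\<in>{..<n}. R k j}. g j k)" for j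
  proof -
    have "{..<n}-{j} = {k\<in>{..<n}. R j k} \<union> {k\<in>{..<n}. R k j}" using irr tot by auto
    moreover have "{k\<in>{..<n}. R j k} \<inter> {k\<in>{..<n}. R k j} = {}" using asym by auto
    ultimately show ?thesis by (simp add: sum.union_disjoint)
  qed
  have "(\<Sum>j<n. \<Sum>k\<in>{k\<in>{..<n}. R k j}. g j k) = (\<Sum>k<n. \<Sum>j\<in>{j\<in>{..<n}. R k j}. g j k)"
    using sum.swap_restrict[of "{..<n}" "{..<n}" "\<lambda>j k. g j k" "\<lambda>j k. R k j"] by simp
  also have "\<dots> = (\<Sum>j<n. \<Sum>k\<in>{k\<in>{..<n}. R j k}. g j k)" using sym by simp
  finally show ?thesis using split by (simp add: sum.distrib)
qed

lemma opt_lower: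
  assumes fs: "feasible_schedule n m S'" and comp: "\<forall>j<n. completes S' p j"
  defines "C \<equiv> compl_time S' p"
  defines "aft \<equiv> (\<lambda>j k. C j < C k \<or> (C j = C k \<and> j < k))"
  shows "(\<Sum>j<n. p j * real (2 * card {k\<in>{..<n}. aft j k} + m)) \<le> 2 * real m * total_cost n S' p"
proof -
  have int: "\<forall>t. indic S' j integrable_on {0..t}" for j using fs by (simp add: feasible_schedule_def)
  define c where "c = (\<lambda>j. card {k\<in>{..<n}. aft j k})"
  define T0 where "T0 = (\<Sum>j<n. C j)"
  have C0: "0 \<le> C j" if "j < n" for j using compl_props(1)[OF int comp[rule_format, OF that]] unfolding C_def .
  have CT: "C j \<le> T0" if "j < n" for j
    unfolding T0_def using C0 that by (intro member_le_sum) auto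
  have T00: "0 \<le> T0" unfolding T0_def using C0 by (intro sum_nonneg) auto
  define f where "f = (\<lambda>j t. if t \<in> {0..C j} then indic S' j t else 0)"
  have sub: "{0..C j} \<inter> {0..T0} = {0..C j}" if "j < n" for j using CT[OF that] by auto
  have fint: "f j integrable_on {0..T0}" if "j < n" for j
    unfolding f_def integrable_restrict_Int sub[OF that] using int by blast
  have fI: "integral {0..T0} (f j) = received S' j (C j)" if "j < n" for j
    unfolding f_def Henstock_Kurzweil_Integration.integral_restrict_Int sub[OF that] received_def ..
  define h where "h = (\<lambda>j t. if t \<in> {0..C j} then 1 else (0::real))"
  have hint: "h j integrable_on {0..T0}" if "j < n" for j
    unfolding h_def integrable_restrict_Int sub[OF that] by (rule integrable_const_ivl)
  have hI: "integral {0..T0} (h j) = C j" if "j < n" for j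
    unfolding h_def Henstock_Kurzweil_Integration.integral_restrict_Int sub[OF that] using C0[OF that] by simp
  have pw: "(\<Sum>j<n. real (2 * c j + m) * f j t) \<le> 2 * real m * (\<Sum>j<n. h j t)" if t: "t \<in> {0..T0}" for t
  proof -
    define U where "U = {j\<in>{..<n}. t \<le> C j}"
    define W where "W = {j\<in>{..<n}. t \<le> C j \<and> j \<in> S' t}"
    have finU: "finite U" unfolding U_def by simp
    have WU: "W \<subseteq> U" unfolding U_def W_def by auto
    have cW: "card W \<le> m"
    proof -
      have "W \<subseteq> S' t" unfolding W_def by auto
      moreover have "finite (S' t)" "card (S' t) \<le> m"
        using fs finite_subset[of "S' t" "{..<n}"] by (auto simp: feasible_schedule_def)
      ultimately show ?thesis by (meson card_mono le_trans)
    qed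
    define R where "R = (\<lambda>a b. aft b a)"
    have irr: "\<And>a. a \<in> U \<Longrightarrow> \<not> R a a" unfolding R_def aft_def by simp
    have trn: "\<And>a b d. a \<in> U \<Longrightarrow> b \<in> U \<Longrightarrow> d \<in> U \<Longrightarrow> R a b \<Longrightarrow> R b d \<Longrightarrow> R a d"
      unfolding R_def aft_def by auto
    have tot: "\<And>a b. a \<in> U \<Longrightarrow> b \<in> U \<Longrightarrow> a \<noteq> b \<Longrightarrow> R a b \<or> R b a"
      unfolding R_def aft_def by auto
    have ceq: "c j = card {x \<in> U. R x j}" if "j \<in> U" for j
    proof -
      have "{k\<in>{..<n}. aft j k} = {x \<in> U. R x j}"
        using that unfolding U_def R_def aft_def by auto
      thus ?thesis unfolding c_def by simp
    qed
    have injU: "inj_on (\<lambda>a. card {x \<in> U. R x a}) U"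
      by (rule rank_lemma(2)[where A=U and R=R]) (use finU irr trn tot in blast)+
    have inj: "inj_on c U" using injU ceq by (simp add: inj_on_def)
    have cb: "\<forall>j\<in>U. c j < card U"
    proof
      fix j assume jU: "j \<in> U"
      have "{x \<in> U. R x j} \<subset> U" using jU irr by blast
      thus "c j < card U" using ceq[OF jU] finU psubset_card_mono by metis
    qed
    have op: "(\<Sum>j\<in>W. real (2 * c j + m)) \<le> 2 * real m * real (card U)"
      by (rule opt_point[OF finU WU cW inj cb])
    have "(\<Sum>j<n. real (2 * c j + m) * f j t) = (\<Sum>j<n. if j \<in> W then real (2 * c j + m) else 0)"
      using t unfolding f_def W_def by (intro sum.cong) (auto simp: indic_def)
    also have "\<dots> = (\<Sum>j\<in>W. real (2 * c j + m))"
    proof -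
      have WW: "{..<n} \<inter> W = W" unfolding W_def by auto
      show ?thesis using sum.inter_restrict[OF finite_lessThan[of n], of "\<lambda>j. real (2 * c j + m)" W] WW
        by simp
    qed
    also have "(\<Sum>j<n. h j t) = real (card U)"
    proof -
      have "(\<Sum>j<n. h j t) = (\<Sum>j<n. if j \<in> U then 1 else 0)"
        using t unfolding h_def U_def by (intro sum.cong) auto
      also have "\<dots> = real (card U)"
      proof -
        have UU: "{..<n} \<inter> U = U" unfolding U_def by auto
        show ?thesis using sum.inter_restrict[OF finite_lessThan[of n], of "\<lambda>j. 1::real" U] UU
          by simp
      qed
      finally show ?thesis .
    qed
    ultimately show ?thesis using op by simp
  qed
  have "(\<Sum>j<n. p j * real (2 * c j + m)) \<le> (\<Sum>j<n. real (2 * c j + m) * integral {0..T0} (f j))"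
  proof (rule sum_mono)
    fix j assume "j \<in> {..<n}"
    hence "p j \<le> integral {0..T0} (f j)" using fI compl_props(2)[OF int comp[rule_format]] unfolding C_def by auto
    thus "p j * real (2 * c j + m) \<le> real (2 * c j + m) * integral {0..T0} (f j)"
      by (metis mult.commute mult_right_mono of_nat_0_le_iff)
  qed
  also have "\<dots> = integral {0..T0} (\<lambda>t. \<Sum>j<n. real (2 * c j + m) * f j t)"
  proof -
    have "integral {0..T0} (\<lambda>t. \<Sum>j<n. real (2 * c j + m) * f j t) = (\<Sum>j<n. integral {0..T0} (\<lambda>t. real (2 * c j + m) * f j t))"
      by (rule integral_sum) (auto intro: integrable_on_mult_right fint)
    thus ?thesis by (simp add: integral_mult_right)
  qed
  also have "\<dots> \<le> integral {0..T0} (\<lambda>t. 2 * real m * (\<Sum>j<n. h j t))"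
    using pw fint hint by (intro integral_le integrable_sum integrable_on_mult_right) auto
  also have "\<dots> = 2 * real m * (\<Sum>j<n. C j)"
  proof -
    have "integral {0..T0} (\<lambda>t. \<Sum>j<n. h j t) = (\<Sum>j<n. integral {0..T0} (h j))"
      by (rule integral_sum) (auto intro: hint)
    thus ?thesis using hI by (simp add: integral_mult_right)
  qed
  finally show ?thesis unfolding total_cost_def C_def c_def by simp
qed

context pmlf begin

lemma ratio:
  assumes fs: "feasible_schedule n m S'" and comp: "\<forall>j<n. completes S' p j"
  shows "total_cost n S p \<le> (2 + 2 * \<delta>) * total_cost n S' p"
proof -
  define C where "C = compl_time S' p"
  define aft where "aft = (\<lambda>j k. C j < C k \<or> (C j = C k \<and> j < k))"
  define c where "c = (\<lambda>j. card {k\<in>{..<n}. aft j k})"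
  define Q where "Q = (\<Sum>j<n. \<Sum>k\<in>{k\<in>{..<n}. aft j k}. min (p j) (p k))"
  define P where "P = (\<Sum>j<n. p j)"
  define OPT where "OPT = total_cost n S' p"
  have p0: "0 \<le> p j" if "j < n" for j using pj[OF that] by simp
  have lo: "(\<Sum>j<n. p j * real (2 * c j + m)) \<le> 2 * real m * OPT"
    using opt_lower[OF fs comp] unfolding c_def aft_def C_def OPT_def .
  have "(\<Sum>j<n. p j * real (2 * c j + m)) = real m * P + 2 * (\<Sum>j<n. p j * real (c j))"
    unfolding P_def by (simp add: sum.distrib sum_distrib_left algebra_simps)
  hence lo2: "P + 2 * (\<Sum>j<n. p j * real (c j)) / m \<le> 2 * OPT"
    using lo m1 by (simp add: field_simps)
  have Qc: "Q \<le> (\<Sum>j<n. p j * real (c j))"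
    unfolding Q_def c_def
  proof (rule sum_mono)
    fix j assume "j \<in> {..<n}"
    have "(\<Sum>k\<in>{k\<in>{..<n}. aft j k}. min (p j) (p k)) \<le> (\<Sum>k\<in>{k\<in>{..<n}. aft j k}. p j)"
      by (rule sum_mono) simp
    thus "(\<Sum>k\<in>{k\<in>{..<n}. aft j k}. min (p j) (p k)) \<le> p j * real (card {k\<in>{..<n}. aft j k})"
      by (simp add: mult.commute)
  qed
  have split: "(\<Sum>j<n. \<Sum>k\<in>{..<n}-{j}. min (p j) (p k)) = 2 * Q"
    unfolding Q_def by (rule sym_split) (auto simp: aft_def min.commute)
  have mn: "min (p k) ((1 + \<delta>) * p j) \<le> (1 + \<delta>) * min (p j) (p k)" if "j < n" "k < n" for j k
    using p0[OF that(1)] p0[OF that(2)] dpos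
    by (cases "p k \<le> p j") (auto simp: min_def algebra_simps mult_le_cancel_right1 intro: order.trans[of _ "p k"])
  have "total_cost n S p \<le> (\<Sum>j<n. Kb j)"
    unfolding total_cost_def by (rule sum_mono) (simp add: compl_le)
  also have "\<dots> = P + (\<Sum>j<n. \<Sum>k\<in>{..<n}-{j}. min (p k) ((1 + \<delta>) * p j)) / m"
    unfolding Kb_def P_def by (simp add: sum.distrib sum_divide_distrib)
  also have "(\<Sum>j<n. \<Sum>k\<in>{..<n}-{j}. min (p k) ((1 + \<delta>) * p j)) \<le> (\<Sum>j<n. \<Sum>k\<in>{..<n}-{j}. (1 + \<delta>) * min (p j) (p k))"
    using mn by (intro sum_mono) auto
  also have "\<dots> = (1 + \<delta>) * (2 * Q)"
    unfolding split[symmetric] sum_distrib_left ..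
  finally have up: "total_cost n S p \<le> P + (1 + \<delta>) * (2 * Q) / m"
    using m1 by (simp add: divide_right_mono)
  have P0: "0 \<le> P" unfolding P_def using p0 by (intro sum_nonneg) auto
  have "P + (1 + \<delta>) * (2 * Q) / m \<le> (1 + \<delta>) * (P + 2 * (\<Sum>j<n. p j * real (c j)) / m)"
  proof -
    have "0 \<le> \<delta> * P" using P0 dpos by simp
    hence "P \<le> (1 + \<delta>) * P" by (simp add: algebra_simps)
    moreover have "(1 + \<delta>) * (2 * Q) / m \<le> (1 + \<delta>) * (2 * (\<Sum>j<n. p j * real (c j)) / m)"
    proof -
      have "2 * Q / m \<le> 2 * (\<Sum>j<n. p j * real (c j)) / m" using Qc m1 by (intro divide_right_mono) auto
      hence "(1 + \<delta>) * (2 * Q / m) \<le> (1 + \<delta>) * (2 * (\<Sum>j<n. p j * real (c j)) / m)"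
        using dpos by (intro mult_left_mono) auto
      thus ?thesis by (metis times_divide_eq_right)
    qed
    ultimately show ?thesis by (simp add: algebra_simps)
  qed
  also have "\<dots> \<le> (1 + \<delta>) * (2 * OPT)" using lo2 dpos by (intro mult_left_mono) auto
  finally show ?thesis using up unfolding OPT_def by (simp add: algebra_simps)
qed

end


locale sim =
  fixes n m :: nat and \<delta> :: real and p ph :: "nat \<Rightarrow> real"
  assumes dpos: "\<delta> > 0" and m1: "m \<ge> 1"
    and pj: "\<And>j. j < n \<Longrightarrow> 1 \<le> p j \<and> 0 < ph j \<and> ph j \<le> p j"
begin

abbreviation q where "q j x \<equiv> qv \<delta> ph j x"

definition avl :: "(nat \<Rightarrow> real) \<Rightarrow> nat \<Rightarrow> bool" where
  "avl r j \<longleftrightarrow> j < n \<and> r j < p j"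

definition prec :: "(nat \<Rightarrow> real) \<Rightarrow> (nat \<Rightarrow> real) \<Rightarrow> nat \<Rightarrow> nat \<Rightarrow> bool" where
  "prec r e a b \<longleftrightarrow> q a (r a) < q b (r b) \<or>
     (q a (r a) = q b (r b) \<and> (e a < e b \<or> (e a = e b \<and> a < b)))"

definition runs :: "(nat \<Rightarrow> real) \<Rightarrow> (nat \<Rightarrow> real) \<Rightarrow> nat set" where
  "runs r e = {j. avl r j \<and> card {k. avl r k \<and> prec r e k j} < m}"

definition gap :: "(nat \<Rightarrow> real) \<Rightarrow> nat \<Rightarrow> real" where
  "gap r j = min (p j - r j) (thr \<delta> (q j (r j) + 1) - r j)"

definition dtf :: "(nat \<Rightarrow> real) \<Rightarrow> (nat \<Rightarrow> real) \<Rightarrow> real" where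
  "dtf r e = (if runs r e = {} then 1 else Min (gap r ` runs r e))"

definition stp :: "real \<times> (nat \<Rightarrow> real) \<times> (nat \<Rightarrow> real) \<Rightarrow> real \<times> (nat \<Rightarrow> real) \<times> (nat \<Rightarrow> real)" where
  "stp st = (case st of (t, r, e) \<Rightarrow>
     (let d = dtf r e; r' = (\<lambda>j. if j \<in> runs r e then r j + d else r j)
      in (t + d, r', \<lambda>j. if q j (r' j) \<noteq> q j (r j) then t + d else e j)))"

definition simst :: "nat \<Rightarrow> real \<times> (nat \<Rightarrow> real) \<times> (nat \<Rightarrow> real)" where
  "simst k = (stp ^^ k) (0, \<lambda>_. 0, \<lambda>_. 0)"

definition tt where "tt k = fst (simst k)"
definition R where "R k = fst (snd (simst k))"
definition E where "E k = snd (snd (simst k))"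
definition RS where "RS k = runs (R k) (E k)"
definition D where "D k = dtf (R k) (E k)"

lemma simst_Suc: "simst (Suc k) = stp (simst k)"
  by (simp add: simst_def)

lemma tt0: "tt 0 = 0" and R0: "R 0 j = 0" and E0: "E 0 j = 0"
  by (simp_all add: tt_def R_def E_def simst_def)

lemma simst_eq: "simst k = (tt k, R k, E k)"
  by (simp add: tt_def R_def E_def)

lemma tt_Suc: "tt (Suc k) = tt k + D k"
  by (simp add: simst_Suc simst_eq[of k] stp_def Let_def tt_def[of "Suc k"] D_def)

lemma R_Suc: "R (Suc k) j = (if j \<in> RS k then R k j + D k else R k j)"
  by (simp add: simst_Suc simst_eq[of k] stp_def Let_def R_def[of "Suc k"] D_def RS_def)

lemma E_Suc: "E (Suc k) j = (if q j (R (Suc k) j) \<noteq> q j (R k j) then tt (Suc k) else E k j)"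
  by (simp add: simst_Suc simst_eq[of k] stp_def Let_def E_def[of "Suc k"] R_Suc tt_Suc D_def RS_def)

lemma runs_sub: "runs r e \<subseteq> {..<n}"
  by (auto simp: runs_def avl_def)

lemma fin_runs: "finite (runs r e)"
  using runs_sub finite_subset by blast

lemma gap_pos: "j \<in> runs r e \<Longrightarrow> 0 < gap r j"
  using Q4[OF dpos, of "r j" ph j] by (auto simp: runs_def avl_def gap_def)

lemma dtf_pos: "0 < dtf r e"
proof (cases "runs r e = {}")
  case False
  hence "Min (gap r ` runs r e) \<in> gap r ` runs r e" using fin_runs by (intro Min_in) auto
  thus ?thesis using False gap_pos by (auto simp: dtf_def)
qed (simp add: dtf_def)

lemma dtf_le: "j \<in> runs r e \<Longrightarrow> dtf r e \<le> gap r j"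
  using fin_runs by (auto simp: dtf_def intro: Min_le)

lemma D_pos: "0 < D k" by (simp add: D_def dtf_pos)

lemma D_le: "j \<in> RS k \<Longrightarrow> D k \<le> gap (R k) j"
  by (simp add: D_def RS_def dtf_le)

lemma RS_avl: "j \<in> RS k \<Longrightarrow> avl (R k) j"
  by (simp add: RS_def runs_def)

lemma tt_less: "tt k < tt (Suc k)" using D_pos tt_Suc by simp

lemma tt_strict: "i < k \<Longrightarrow> tt i < tt k"
  using lift_Suc_mono_less[of tt, OF tt_less] by blast

lemma tt_mono: "i \<le> k \<Longrightarrow> tt i \<le> tt k"
  using tt_strict[of i k] by (cases "i = k") auto

lemma tt_nonneg: "0 \<le> tt k" using tt_mono[of 0 k] tt0 by simp

lemma R_mono_Suc: "R k j \<le> R (Suc k) j"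
  using D_pos[of k] by (simp add: R_Suc)

lemma R_nonneg: "0 \<le> R k j"
  by (induction k) (auto simp: R0 intro: order.trans[OF _ R_mono_Suc])

lemma R_Suc_run: assumes "j \<in> RS k"
  shows "R (Suc k) j \<le> p j" "R (Suc k) j \<le> thr \<delta> (q j (R k j) + 1)"
  using D_le[OF assms] assms by (auto simp: R_Suc gap_def)

lemma R_le_p: "j < n \<Longrightarrow> R k j \<le> p j"
proof (induction k)
  case 0 thus ?case using pj[of j] by (simp add: R0)
next
  case (Suc k) thus ?case using R_Suc_run[of j k] by (cases "j \<in> RS k") (auto simp: R_Suc)
qed

lemma R_ge_n: "n \<le> j \<Longrightarrow> R k j = 0"
  by (induction k) (auto simp: R0 R_Suc dest!: RS_avl simp: avl_def)

definition Iset where "Iset j x = {i. kinit \<delta> ph j < i \<and> x < thr \<delta> i \<and> thr \<delta> i < p j}"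
definition phi where "phi j x = card (Iset j x) + (if x < p j then 1 else 0)"
definition pot where "pot k = (\<Sum>j<n. phi j (R k j))"

lemma fin_Iset: "finite (Iset j x)"
proof (cases "0 < p j")
  case True
  have "Iset j x \<subseteq> {kinit \<delta> ph j .. \<lceil>log (1 + \<delta>) (p j)\<rceil>}"
    using thr_less_x_iff[OF dpos True] by (auto simp: Iset_def intro: less_imp_le simp: le_ceiling_iff)
  thus ?thesis by (rule finite_subset) simp
next
  case False
  have "\<not> thr \<delta> i < p j" for i using thr_pos[OF dpos, of i] False by linarith
  hence "Iset j x = {}" unfolding Iset_def by blast
  thus ?thesis by (metis finite.emptyI)
qed

lemma phi_anti: "x \<le> y \<Longrightarrow> phi j y \<le> phi j x"
proof -
  assume xy: "x \<le> y"
  have "Iset j y \<subseteq> Iset j x" using xy unfolding Iset_def by auto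
  hence "card (Iset j y) \<le> card (Iset j x)" using fin_Iset by (intro card_mono)
  thus ?thesis using xy unfolding phi_def by auto
qed

lemma pot_mono: "pot (Suc k) \<le> pot k"
  unfolding pot_def by (intro sum_mono phi_anti R_mono_Suc)

lemma pot_strict: assumes ne: "RS k \<noteq> {}" shows "pot (Suc k) < pot k"
proof -
  have "D k \<in> gap (R k) ` RS k"
    using ne fin_runs unfolding D_def RS_def dtf_def by (auto intro: Min_in)
  then obtain j0 where j0: "j0 \<in> RS k" "D k = gap (R k) j0" by auto
  have av: "avl (R k) j0" by (rule RS_avl[OF j0(1)])
  define i where "i = q j0 (R k j0)"
  have R1: "R (Suc k) j0 = R k j0 + D k" using j0 by (simp add: R_Suc)
  have lt: "phi j0 (R (Suc k) j0) < phi j0 (R k j0)"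
  proof (cases "p j0 - R k j0 \<le> thr \<delta> (i + 1) - R k j0")
    case True
    hence "R (Suc k) j0 = p j0" using R1 j0(2) unfolding gap_def i_def by simp
    moreover have "Iset j0 (p j0) \<subseteq> Iset j0 (R k j0)" using av unfolding Iset_def avl_def by auto
    moreover have "card (Iset j0 (p j0)) \<le> card (Iset j0 (R k j0))"
      using calculation(2) fin_Iset by (intro card_mono)
    ultimately show ?thesis using av unfolding phi_def avl_def by simp
  next
    case False
    hence eq: "R (Suc k) j0 = thr \<delta> (i + 1)" and lp: "thr \<delta> (i + 1) < p j0"
      using R1 j0(2) unfolding gap_def i_def by auto
    have kin: "kinit \<delta> ph j0 < i + 1" using Q1[OF dpos, of ph j0 "R k j0"] unfolding i_def by simp
    have "i + 1 \<in> Iset j0 (R k j0)" using kin lp Q4[OF dpos, of "R k j0" ph j0]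
      unfolding Iset_def i_def by simp
    moreover have "i + 1 \<notin> Iset j0 (R (Suc k) j0)" using eq unfolding Iset_def by simp
    moreover have "Iset j0 (R (Suc k) j0) \<subseteq> Iset j0 (R k j0)" using R_mono_Suc[of k j0] unfolding Iset_def by auto
    ultimately have "card (Iset j0 (R (Suc k) j0)) < card (Iset j0 (R k j0))"
      using fin_Iset by (intro psubset_card_mono) auto
    thus ?thesis using eq lp av unfolding phi_def avl_def by simp
  qed
  have "j0 < n" using av by (simp add: avl_def)
  thus ?thesis unfolding pot_def
    by (intro sum_strict_mono_ex1) (auto intro: phi_anti R_mono_Suc lt)
qed

lemma tt_lower: "real k + real (pot k) \<le> tt k + real (pot 0)"
proof (induction k)
  case 0 thus ?case by (simp add: tt0)
next
  case (Suc k)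
  show ?case
  proof (cases "RS k = {}")
    case True
    hence "D k = 1" "R (Suc k) = R k" by (auto simp: D_def RS_def dtf_def R_Suc fun_eq_iff)
    thus ?thesis using Suc by (simp add: tt_Suc pot_def)
  next
    case False
    hence "pot (Suc k) + 1 \<le> pot k" using pot_strict by (simp add: Suc_le_eq)
    hence "real (pot (Suc k)) + 1 \<le> real (pot k)" by linarith
    thus ?thesis using Suc tt_Suc[of k] D_pos[of k] by simp
  qed
qed

lemma unbounded: "\<exists>k. t < tt k"
proof -
  define k where "k = nat \<lceil>t + real (pot 0)\<rceil> + 1"
  have "t + real (pot 0) < real k" unfolding k_def by linarith
  moreover have "real k \<le> tt k + real (pot 0)" using tt_lower[of k] by simp
  ultimately show ?thesis by (intro exI[of _ k]) simp
qed

definition kof where "kof t = (LEAST k. t < tt (Suc k))"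

lemma kof_eq: assumes "tt k \<le> t" "t < tt (Suc k)" shows "kof t = k"
  unfolding kof_def
proof (rule Least_equality)
  show "t < tt (Suc k)" by fact
  fix y assume "t < tt (Suc y)"
  show "k \<le> y"
  proof (rule ccontr)
    assume "\<not> k \<le> y"
    hence "Suc y \<le> k" by simp
    hence "tt (Suc y) \<le> tt k" by (rule tt_mono)
    thus False using \<open>t < tt (Suc y)\<close> assms(1) by simp
  qed
qed

lemma kof_props: assumes "0 \<le> t" shows "tt (kof t) \<le> t" "t < tt (Suc (kof t))"
proof -
  obtain k0 where "t < tt k0" using unbounded by blast
  hence ex: "t < tt (Suc k0)" using tt_less[of k0] by simp
  show "t < tt (Suc (kof t))" unfolding kof_def by (rule LeastI[of _ k0]) (rule ex)
  show "tt (kof t) \<le> t"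
  proof (cases "kof t")
    case 0 thus ?thesis using assms tt0 by simp
  next
    case (Suc k')
    have "\<not> t < tt (Suc k')" using not_less_Least[of k' "\<lambda>k. t < tt (Suc k)"] Suc unfolding kof_def by simp
    thus ?thesis using Suc by simp
  qed
qed

end


context sim begin

definition Sch where "Sch t = (if t < 0 then {} else RS (kof t))"

lemma Sch_on: "tt k \<le> t \<Longrightarrow> t < tt (Suc k) \<Longrightarrow> Sch t = RS k"
  using tt_nonneg[of k] kof_eq by (simp add: Sch_def)

lemma has_int_step:
  assumes "tt k \<le> t" "t \<le> tt (Suc k)"
  shows "(indic Sch j has_integral ((t - tt k) * (if j \<in> RS k then 1 else 0))) {tt k..t}"
proof -
  let ?c = "if j \<in> RS k then 1 else (0::real)"
  have h: "((\<lambda>_. ?c) has_integral ((t - tt k) * ?c)) {tt k..t}"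
    using has_integral_const_real[of ?c "tt k" t] assms by simp
  show ?thesis
  proof (rule has_integral_spike_finite[of "{t}" _ _ "\<lambda>_. ?c"])
    fix x assume "x \<in> {tt k..t} - {t}"
    hence "tt k \<le> x" "x < tt (Suc k)" using assms by auto
    thus "indic Sch j x = ?c" by (simp add: indic_def Sch_on)
  qed (use h in auto)
qed

lemma has_int_R:
  "tt k \<le> t \<Longrightarrow> t \<le> tt (Suc k) \<Longrightarrow>
   (indic Sch j has_integral (R k j + (t - tt k) * (if j \<in> RS k then 1 else 0))) {0..t}"
proof (induction k arbitrary: t)
  case 0
  thus ?case using has_int_step[OF 0] by (simp add: tt0 R0)
next
  case (Suc k)
  have a: "(indic Sch j has_integral (R k j + (tt (Suc k) - tt k) * (if j \<in> RS k then 1 else 0))) {0..tt (Suc k)}"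
    using Suc.IH[of "tt (Suc k)"] tt_less[of k] by simp
  moreover have "R k j + (tt (Suc k) - tt k) * (if j \<in> RS k then 1 else 0) = R (Suc k) j"
    by (simp add: R_Suc tt_Suc)
  ultimately have a': "(indic Sch j has_integral R (Suc k) j) {0..tt (Suc k)}" by simp
  have b: "(indic Sch j has_integral ((t - tt (Suc k)) * (if j \<in> RS (Suc k) then 1 else 0))) {tt (Suc k)..t}"
    using has_int_step Suc.prems by blast
  show ?case using has_integral_combine[OF tt_nonneg Suc.prems(1) a' b] .
qed

lemma rec_R: "tt k \<le> t \<Longrightarrow> t \<le> tt (Suc k) \<Longrightarrow>
   received Sch j t = R k j + (t - tt k) * (if j \<in> RS k then 1 else 0)"
  using has_int_R by (simp add: received_def integral_unique)

lemma rec_tt: "received Sch j (tt k) = R k j"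
  using rec_R[of k "tt k" j] tt_less[of k] by simp

lemma Sch_int: "\<forall>t. indic Sch j integrable_on {0..t}"
proof
  fix t :: real
  show "indic Sch j integrable_on {0..t}"
  proof (cases "t < 0")
    case True thus ?thesis using has_integral_empty integrable_on_def by fastforce
  next
    case False
    hence "tt (kof t) \<le> t" "t \<le> tt (Suc (kof t))" using kof_props[of t] by auto
    thus ?thesis using has_int_R by blast
  qed
qed

lemma prec_irr: "\<not> prec r e a a" by (simp add: prec_def)

lemma prec_trans: "prec r e a b \<Longrightarrow> prec r e b c \<Longrightarrow> prec r e a c"
  unfolding prec_def by (elim disjE conjE) auto

lemma prec_tot: "a \<noteq> b \<Longrightarrow> prec r e a b \<or> prec r e b a"
  unfolding prec_def by auto

lemma card_runs: "card (runs r e) \<le> m"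
proof -
  define A where "A = {k. avl r k}"
  have finA: "finite A" unfolding A_def avl_def by simp
  have "runs r e = {a \<in> A. card {c \<in> A. prec r e c a} < m}" unfolding runs_def A_def by simp
  also have "card \<dots> = min m (card A)"
    by (rule rank_lemma(3)) (use finA prec_irr prec_trans prec_tot in blast)+
  finally show ?thesis by simp
qed

lemma Sch_feasible: "feasible_schedule n m Sch"
  unfolding feasible_schedule_def
proof (intro conjI allI)
  fix t
  show "Sch t \<subseteq> {..<n}" using runs_sub by (simp add: Sch_def RS_def)
  show "card (Sch t) \<le> m" using card_runs m1 by (simp add: Sch_def RS_def)
next
  fix j t show "indic Sch j integrable_on {0..t}" using Sch_int by blast
qed

lemma state_at:
  assumes "tt k \<le> t" "t < tt (Suc k)"
  shows "available n p Sch j t \<longleftrightarrow> avl (R k) j" and "qidx \<delta> ph Sch j t = q j (R k j)"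
proof -
  have rr: "received Sch j t = R k j + (t - tt k) * (if j \<in> RS k then 1 else 0)"
    using rec_R assms by simp
  have "(available n p Sch j t \<longleftrightarrow> avl (R k) j) \<and> qidx \<delta> ph Sch j t = q j (R k j)"
  proof (cases "j \<in> RS k")
    case True
    have d: "t - tt k < D k" using assms tt_Suc[of k] by simp
    have g: "D k \<le> gap (R k) j" by (rule D_le[OF True])
    have av: "avl (R k) j" by (rule RS_avl[OF True])
    have r1: "received Sch j t < p j" "received Sch j t < thr \<delta> (q j (R k j) + 1)"
      using rr True d g unfolding gap_def by auto
    have r2: "R k j \<le> received Sch j t" using rr True assms by simp
    show ?thesis using av r1 Q_eq[OF dpos r2 r1(2)] unfolding qidx_qv available_def avl_def by simp
  next
    case False
    thus ?thesis using rr unfolding qidx_qv available_def avl_def by simp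
  qed
  thus "available n p Sch j t \<longleftrightarrow> avl (R k) j" and "qidx \<delta> ph Sch j t = q j (R k j)" by auto
qed

lemma reached_mono:
  assumes "s \<le> s'" "reached \<delta> ph Sch j i s" shows "reached \<delta> ph Sch j i s'"
  using assms received_mono[OF Sch_int, of s s' j] by (auto simp: reached_def)

lemma q0: "q j 0 = kinit \<delta> ph j"
  using thr_pos[OF dpos, of "kinit \<delta> ph j + 1"] by (simp add: qv_def)

lemma E_inv: "0 \<le> E k j \<and> E k j \<le> tt k \<and>
  (\<forall>s. 0 \<le> s \<longrightarrow> s \<le> tt k \<longrightarrow> (reached \<delta> ph Sch j (q j (R k j)) s \<longleftrightarrow> E k j \<le> s))"
proof (induction k)
  case 0 thus ?case by (auto simp: E0 tt0 R0 q0 reached_def)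
next
  case (Suc k)
  define i where "i = q j (R k j)"
  show ?case
  proof (cases "q j (R (Suc k) j) = i")
    case True
    have E1: "E (Suc k) j = E k j" using True by (simp add: E_Suc i_def)
    have tk: "tt k \<le> tt (Suc k)" using tt_less[of k] by simp
    have rk: "reached \<delta> ph Sch j i (tt k)" using Suc tt_nonneg[of k] unfolding i_def by auto
    show ?thesis
    proof (intro conjI allI impI)
      show "0 \<le> E (Suc k) j" "E (Suc k) j \<le> tt (Suc k)" using E1 Suc tk by auto
    next
      fix s assume s: "0 \<le> s" "s \<le> tt (Suc k)"
      show "reached \<delta> ph Sch j (q j (R (Suc k) j)) s \<longleftrightarrow> E (Suc k) j \<le> s"
      proof (cases "s \<le> tt k")
        case True thus ?thesis using Suc s E1 \<open>q j (R (Suc k) j) = i\<close> unfolding i_def by auto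
      next
        case False
        hence "reached \<delta> ph Sch j i s" using reached_mono[OF _ rk, of s] by simp
        thus ?thesis using False E1 Suc \<open>q j (R (Suc k) j) = i\<close> by auto
      qed
    qed
  next
    case False
    have E1: "E (Suc k) j = tt (Suc k)" using False by (simp add: E_Suc i_def)
    have run: "j \<in> RS k"
    proof (rule ccontr)
      assume "j \<notin> RS k"
      hence "R (Suc k) j = R k j" by (simp add: R_Suc)
      thus False using False unfolding i_def by simp
    qed
    have le: "R (Suc k) j \<le> thr \<delta> (i + 1)" using R_Suc_run(2)[OF run] unfolding i_def .
    have eq: "R (Suc k) j = thr \<delta> (i + 1)"
    proof (rule ccontr)
      assume "R (Suc k) j \<noteq> thr \<delta> (i + 1)"
      hence "R (Suc k) j < thr \<delta> (i + 1)" using le by simp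
      hence "q j (R (Suc k) j) = q j (R k j)"
        using Q_eq[OF dpos R_mono_Suc[of k j]] unfolding i_def by simp
      thus False using False unfolding i_def by simp
    qed
    have kin: "kinit \<delta> ph j < i + 1" using Q1[OF dpos, of ph j "R k j"] unfolding i_def by simp
    have qn: "q j (R (Suc k) j) = i + 1" using eq Q_thr[OF dpos kin] by simp
    have below: "received Sch j s < thr \<delta> (i + 1)" if "0 \<le> s" "s < tt (Suc k)" for s
    proof (cases "tt k \<le> s")
      case True
      have "received Sch j s = R k j + (s - tt k)" using rec_R[OF True] that run by simp
      also have "\<dots> < R k j + D k" using that tt_Suc[of k] by simp
      also have "\<dots> = thr \<delta> (i + 1)" using eq run by (simp add: R_Suc)
      finally show ?thesis .
    next
      case False
      have "received Sch j s \<le> received Sch j (tt k)" using False by (intro received_mono[OF Sch_int]) simp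
      also have "\<dots> = R k j" by (rule rec_tt)
      also have "\<dots> < thr \<delta> (i + 1)" unfolding i_def by (rule Q4[OF dpos])
      finally show ?thesis .
    qed
    show ?thesis
    proof (intro conjI allI impI)
      show "0 \<le> E (Suc k) j" "E (Suc k) j \<le> tt (Suc k)" using E1 tt_nonneg by auto
    next
      fix s assume s: "0 \<le> s" "s \<le> tt (Suc k)"
      have "reached \<delta> ph Sch j (i + 1) s \<longleftrightarrow> thr \<delta> (i + 1) \<le> received Sch j s"
        using kin by (auto simp: reached_def)
      also have "\<dots> \<longleftrightarrow> s = tt (Suc k)"
      proof
        assume "thr \<delta> (i + 1) \<le> received Sch j s"
        thus "s = tt (Suc k)" using below[of s] s by fastforce
      next
        assume "s = tt (Suc k)"
        thus "thr \<delta> (i + 1) \<le> received Sch j s" using rec_tt[of j "Suc k"] eq by simp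
      qed
      finally show "reached \<delta> ph Sch j (q j (R (Suc k) j)) s \<longleftrightarrow> E (Suc k) j \<le> s"
        using qn E1 s by auto
    qed
  qed
qed

abbreviation EB where "EB a b i \<equiv> enters_before \<delta> ph Sch a b i"

lemma E_reach:
  assumes "q a (R k a) = i" "0 \<le> s" "s \<le> tt k"
  shows "reached \<delta> ph Sch a i s \<longleftrightarrow> E k a \<le> s"
proof -
  have "\<forall>s. 0 \<le> s \<longrightarrow> s \<le> tt k \<longrightarrow> (reached \<delta> ph Sch a (q a (R k a)) s \<longleftrightarrow> E k a \<le> s)"
    using E_inv[of k a] by blast
  hence "reached \<delta> ph Sch a (q a (R k a)) s \<longleftrightarrow> E k a \<le> s" using assms(2,3) by blast
  thus ?thesis using assms(1) by simp
qed

lemma E_bounds: "0 \<le> E k a" "E k a \<le> tt k"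
  using E_inv[of k a] by blast+

lemma EB_char:
  assumes qa: "q a (R k a) = i" and qb: "q b (R k b) = i"
  shows "EB a b i \<longleftrightarrow> E k a < E k b"
proof
  assume "EB a b i"
  then obtain s where s: "0 \<le> s" "reached \<delta> ph Sch a i s" "\<not> reached \<delta> ph Sch b i s"
    unfolding enters_before_def by blast
  show "E k a < E k b"
  proof (cases "s \<le> tt k")
    case True
    have "E k a \<le> s" using E_reach[OF qa s(1) True] s(2) by blast
    moreover have "\<not> E k b \<le> s" using E_reach[OF qb s(1) True] s(3) by blast
    ultimately show ?thesis by linarith
  next
    case False
    have "reached \<delta> ph Sch b i (tt k)"
      using E_reach[OF qb tt_nonneg order.refl] E_bounds[of k b] by blast
    hence "reached \<delta> ph Sch b i s" using False reached_mono[where s="tt k" and s'=s] by simp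
    thus ?thesis using s by blast
  qed
next
  assume lt: "E k a < E k b"
  have e0: "0 \<le> E k a" "E k a \<le> tt k" using E_bounds by blast+
  have "reached \<delta> ph Sch a i (E k a)" using E_reach[OF qa e0] by blast
  moreover have "\<not> reached \<delta> ph Sch b i (E k a)" using E_reach[OF qb e0] lt by linarith
  ultimately show "EB a b i" unfolding enters_before_def using e0 by blast
qed

lemma EB_irr: "\<not> EB a a i" by (auto simp: enters_before_def)

lemma EB_negtrans: "EB a c i \<Longrightarrow> EB a b i \<or> EB b c i"
  by (auto simp: enters_before_def)

lemma EB_trans: assumes "EB a b i" "EB b c i" shows "EB a c i"
proof -
  obtain s1 where s1: "0 \<le> s1" "reached \<delta> ph Sch a i s1" "\<not> reached \<delta> ph Sch b i s1"
    using assms(1) unfolding enters_before_def by blast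
  obtain s2 where s2: "0 \<le> s2" "reached \<delta> ph Sch b i s2" "\<not> reached \<delta> ph Sch c i s2"
    using assms(2) unfolding enters_before_def by blast
  have "s1 \<le> s2"
  proof (rule ccontr)
    assume "\<not> s1 \<le> s2"
    hence "reached \<delta> ph Sch b i s1" using reached_mono[OF _ s2(2), of s1] by simp
    thus False using s1 by simp
  qed
  hence "reached \<delta> ph Sch a i s2" using reached_mono[OF _ s1(2)] by simp
  thus ?thesis using s2 unfolding enters_before_def by blast
qed

definition bef where "bef i a b \<longleftrightarrow> EB a b i \<or> (\<not> EB b a i \<and> a < b)"

definition pos where "pos j i = card {a \<in> {..<n}. bef i a j}"

lemma bef_irr: "\<not> bef i a a" by (simp add: bef_def EB_irr)

lemma bef_trans: assumes ab: "bef i a b" and bc: "bef i b c" shows "bef i a c"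
proof -
  have n1: "EB x z i \<Longrightarrow> EB x y i \<or> EB y z i" for x y z by (rule EB_negtrans)
  show ?thesis
  proof (cases "EB a b i")
    case ab1: True
    show ?thesis
    proof (cases "EB b c i")
      case True thus ?thesis using EB_trans[OF ab1 True] by (simp add: bef_def)
    next
      case False
      hence "\<not> EB c b i" using bc by (simp add: bef_def)
      hence "EB a c i" using n1[OF ab1, of c] by blast
      thus ?thesis by (simp add: bef_def)
    qed
  next
    case ab1: False
    hence ab2: "\<not> EB b a i" "a < b" using ab by (auto simp: bef_def)
    show ?thesis
    proof (cases "EB b c i")
      case True
      hence "EB a c i" using n1[OF True, of a] ab2 by blast
      thus ?thesis by (simp add: bef_def)
    next
      case False
      hence bc2: "\<not> EB c b i" "b < c" using bc by (auto simp: bef_def)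
      have "\<not> EB c a i" using n1[of c a b] bc2 ab2 by blast
      thus ?thesis using ab2 bc2 by (simp add: bef_def)
    qed
  qed
qed

lemma bef_tot: "a \<noteq> b \<Longrightarrow> bef i a b \<or> bef i b a"
  unfolding bef_def by auto

lemma pos_lt: "a < n \<Longrightarrow> b < n \<Longrightarrow> bef i a b \<Longrightarrow> pos a i < pos b i"
  unfolding pos_def
  by (rule rank_lemma(1)[where A="{..<n}" and R="bef i"]) (use bef_irr bef_trans bef_tot in auto)

lemma pos_inj: "inj_on (\<lambda>j. pos j i) {..<n}"
  unfolding pos_def
  by (rule rank_lemma(2)[where A="{..<n}" and R="bef i"]) (use bef_irr bef_trans bef_tot in auto)

lemma pos_iff: assumes "a < n" "b < n" shows "pos a i < pos b i \<longleftrightarrow> bef i a b"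
proof
  assume lt: "pos a i < pos b i"
  show "bef i a b"
  proof (rule ccontr)
    assume nb: "\<not> bef i a b"
    show False
    proof (cases "a = b")
      case True thus False using lt by simp
    next
      case False
      hence "bef i b a" using nb bef_tot by blast
      thus False using pos_lt[OF assms(2,1), of i] lt by simp
    qed
  qed
qed (rule pos_lt[OF assms])

lemma valid_pos: "valid_positions n \<delta> ph Sch pos"
  unfolding valid_positions_def using pos_inj pos_lt by (auto simp: bef_def)

lemma prio_match:
  assumes t: "tt k \<le> t" "t < tt (Suc k)" and ab: "avl (R k) a" "avl (R k) b"
  shows "prio_less \<delta> ph Sch pos a b t \<longleftrightarrow> prec (R k) (E k) a b"
proof -
  have qa: "qidx \<delta> ph Sch a t = q a (R k a)" and qb: "qidx \<delta> ph Sch b t = q b (R k b)"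
    using state_at[OF t] by blast+
  have n: "a < n" "b < n" using ab by (auto simp: avl_def)
  show ?thesis
  proof (cases "q a (R k a) = q b (R k b)")
    case True
    define i where "i = q a (R k a)"
    have qa': "q a (R k a) = i" and qb': "q b (R k b) = i" using True by (simp_all add: i_def)
    have e1: "EB a b i \<longleftrightarrow> E k a < E k b" by (rule EB_char[OF qa' qb'])
    have e2: "EB b a i \<longleftrightarrow> E k b < E k a" by (rule EB_char[OF qb' qa'])
    have "pos a i < pos b i \<longleftrightarrow> bef i a b" by (rule pos_iff[OF n])
    also have "\<dots> \<longleftrightarrow> (E k a < E k b \<or> (\<not> E k b < E k a \<and> a < b))" by (simp only: bef_def e1 e2)
    also have "\<dots> \<longleftrightarrow> (E k a < E k b \<or> (E k a = E k b \<and> a < b))" by linarith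
    finally have pe: "pos a i < pos b i \<longleftrightarrow> (E k a < E k b \<or> (E k a = E k b \<and> a < b))" .
    have "prio_less \<delta> ph Sch pos a b t \<longleftrightarrow> pos a i < pos b i"
      unfolding prio_less_def qa qb using qa' qb' by simp
    moreover have "prec (R k) (E k) a b \<longleftrightarrow> (E k a < E k b \<or> (E k a = E k b \<and> a < b))"
      unfolding prec_def using qa' qb' by simp
    ultimately show ?thesis using pe by simp
  next
    case False
    thus ?thesis unfolding prio_less_def prec_def qa qb by simp
  qed
qed

lemma Sch_PMLF: "is_PMLF n m \<delta> p ph Sch pos"
  unfolding is_PMLF_def
proof (intro conjI allI impI)
  show "feasible_schedule n m Sch" by (rule Sch_feasible)
  show "valid_positions n \<delta> ph Sch pos" by (rule valid_pos)
next
  fix t :: real assume t0: "0 \<le> t"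
  define k where "k = kof t"
  have t: "tt k \<le> t" "t < tt (Suc k)" using kof_props[OF t0] unfolding k_def by auto
  have Sk: "Sch t = runs (R k) (E k)" using Sch_on[OF t] unfolding RS_def .
  have av: "\<And>j. available n p Sch j t \<longleftrightarrow> avl (R k) j" using state_at[OF t] by blast
  show "Sch t = {j. available n p Sch j t \<and>
      card {j'. available n p Sch j' t \<and> prio_less \<delta> ph Sch pos j' j t} < m}"
  proof (rule set_eqI)
    fix j
    show "j \<in> Sch t \<longleftrightarrow> j \<in> {j. available n p Sch j t \<and>
      card {j'. available n p Sch j' t \<and> prio_less \<delta> ph Sch pos j' j t} < m}"
    proof (cases "avl (R k) j")
      case True
      have "{j'. available n p Sch j' t \<and> prio_less \<delta> ph Sch pos j' j t} =
            {k'. avl (R k) k' \<and> prec (R k) (E k) k' j}"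
      proof (rule Collect_cong)
        fix x
        show "(available n p Sch x t \<and> prio_less \<delta> ph Sch pos x j t) \<longleftrightarrow> (avl (R k) x \<and> prec (R k) (E k) x j)"
          using av[of x] prio_match[OF t _ True, of x] by blast
      qed
      thus ?thesis unfolding Sk runs_def using True av[of j] by simp
    next
      case False
      thus ?thesis unfolding Sk runs_def using av[of j] by simp
    qed
  qed
qed

end


theorem mainTheorem4:
  fixes \<delta> :: real
  assumes "\<delta> > 0"
  shows "\<exists>c::real. \<forall>(n::nat) (m::nat) (p::nat \<Rightarrow> real) (ph::nat \<Rightarrow> real).
    m \<ge> 1 \<and> (\<forall>j<n. 1 \<le> p j \<and> 0 < ph j \<and> ph j \<le> p j) \<longrightarrow>
      (\<exists>S pos. is_PMLF n m \<delta> p ph S pos) \<and>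
      (\<forall>S pos. is_PMLF n m \<delta> p ph S pos \<longrightarrow>
         (\<forall>j<n. completes S p j) \<and>
         (\<forall>S'. feasible_schedule n m S' \<and> (\<forall>j<n. completes S' p j) \<longrightarrow>
               total_cost n S p \<le> (2 + 2 * \<delta>) * total_cost n S' p) \<and>
         (\<forall>j<n. finite {t. preempt_at S p j t}) \<and>
         real (\<Sum>j<n. num_preemptions S p j)
            \<le> c * (\<Sum>j<n. of_int \<lceil>ln (p j / ph j) / \<delta>\<rceil>))"
proof -
  define c where "c = \<delta> / ln (1 + \<delta>) + 1"
  show ?thesis
  proof (rule exI[of _ c], intro allI impI)
  fix n m :: nat and p ph :: "nat \<Rightarrow> real"
  assume h: "m \<ge> 1 \<and> (\<forall>j<n. 1 \<le> p j \<and> 0 < ph j \<and> ph j \<le> p j)"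
  have m1: "m \<ge> 1" and pj: "\<And>j. j < n \<Longrightarrow> 1 \<le> p j \<and> 0 < ph j \<and> ph j \<le> p j" using h by auto
  have ex: "\<exists>S pos. is_PMLF n m \<delta> p ph S pos"
  proof -
    interpret sim n m \<delta> p ph by unfold_locales (use assms m1 pj in auto)
    show ?thesis using Sch_PMLF by blast
  qed
  have all: "(\<forall>j<n. completes S p j) \<and>
         (\<forall>S'. feasible_schedule n m S' \<and> (\<forall>j<n. completes S' p j) \<longrightarrow>
               total_cost n S p \<le> (2 + 2 * \<delta>) * total_cost n S' p) \<and>
         (\<forall>j<n. finite {t. preempt_at S p j t}) \<and>
         real (\<Sum>j<n. num_preemptions S p j)
            \<le> c * (\<Sum>j<n. of_int \<lceil>ln (p j / ph j) / \<delta>\<rceil>)"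
    if pm: "is_PMLF n m \<delta> p ph S pos" for S pos
  proof -
    interpret pmlf n m \<delta> p ph S pos by unfold_locales (use assms m1 pj pm in auto)
    have a: "\<forall>j<n. completes S p j" using completes_j by blast
    have b: "\<forall>S'. feasible_schedule n m S' \<and> (\<forall>j<n. completes S' p j) \<longrightarrow>
               total_cost n S p \<le> (2 + 2 * \<delta>) * total_cost n S' p" using ratio by blast
    have d: "\<forall>j<n. finite {t. preempt_at S p j t}" using preempt_count(1) by blast
    have "real (\<Sum>j<n. num_preemptions S p j) = (\<Sum>j<n. real (num_preemptions S p j))" by simp
    also have "\<dots> \<le> (\<Sum>j<n. c * of_int \<lceil>ln (p j / ph j) / \<delta>\<rceil>)"
    proof (rule sum_mono)
      fix j assume "j \<in> {..<n}"
      hence j: "j < n" by simp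
      have "real (num_preemptions S p j) \<le> real (card {i. kinit \<delta> ph j < i \<and> thr \<delta> i < p j})"
        using preempt_count(2)[OF j] by simp
      also have "\<dots> \<le> c * of_int \<lceil>ln (p j / ph j) / \<delta>\<rceil>"
        unfolding c_def using count_bound[OF assms, of ph j p] pj[OF j] by simp
      finally show "real (num_preemptions S p j) \<le> c * of_int \<lceil>ln (p j / ph j) / \<delta>\<rceil>" .
    qed
    also have "\<dots> = c * (\<Sum>j<n. of_int \<lceil>ln (p j / ph j) / \<delta>\<rceil>)" by (simp add: sum_distrib_left)
    finally show ?thesis using a b d by blast
  qed
  show "(\<exists>S pos. is_PMLF n m \<delta> p ph S pos) \<and>
      (\<forall>S pos. is_PMLF n m \<delta> p ph S pos \<longrightarrow>
         (\<forall>j<n. completes S p j) \<and>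
         (\<forall>S'. feasible_schedule n m S' \<and> (\<forall>j<n. completes S' p j) \<longrightarrow>
               total_cost n S p \<le> (2 + 2 * \<delta>) * total_cost n S' p) \<and>
         (\<forall>j<n. finite {t. preempt_at S p j t}) \<and>
         real (\<Sum>j<n. num_preemptions S p j)
            \<le> c * (\<Sum>j<n. of_int \<lceil>ln (p j / ph j) / \<delta>\<rceil>))"
    using ex all by blast
  qed
qed

end
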